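(* Let $c>0$, $\beta\in[0,1)$ and let $\mathcal{D}_{n,c}^{*\beta}$ be the King-type modified Jain-Baskakov operators defined in the context. Then for every $x\ge 0$: (i) $\mathcal{D}_{n,c}^{*\beta}(t-x,x)=0$ for $n>2c$; (ii) for $n>3c$, $$\mathcal{D}_{n,c}^{*\beta}((t-x)^2,x)=\frac{c}{n-3c}\,x^2+\frac{2-2\beta+\beta^2}{(n-3c)(1-\beta)^2}\,x;$$ (iii) $\mathcal{D}_{n,c}^{*\beta}((t-x)^4,x)=o\!\left(\frac{1}{n}\right)$ as $n\to\infty$ (with $n>5c$, and $c,\beta,x$ fixed).
   Context: For $\beta\in[0,1)$, $y\ge 0$, $n\in\mathbb{N}$ and integers $v\ge 0$ let $\omega_\beta(v,ny)=ny(ny+v\beta)^{v-1}\frac{e^{-(ny+v\beta)}}{v!}$. For $c>0$, integers $v\ge1$ and $t\ge 0$ let $p_{n,v-1,c}(t)=c\,\frac{\Gamma(n/c+v-1)}{\Gamma(v)\Gamma(n/c)}\cdot\frac{(ct)^{v-1}}{(1+ct)^{n/c+v-1}}$. For $n>2c$ put $r_n(x)=\frac{(n-2c)(1-\beta)x}{n}$ and define, for functions $f$ on $[0,\infty)$ for which the integrals exist, $$\mathcal{D}_{n,c}^{*\beta}(f,x)=\frac{n-c}{c}\sum_{v=1}^{\infty}\omega_\beta(v,n r_n(x))\int_0^\infty p_{n,v-1,c}(t)f(t)\,dt+e^{-n r_n(x)}f(0),\quad x\ge0.$$ Here $\mathcal{D}_{n,c}^{*\beta}(g(t),x)$ means the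 operator applied to the function $t\mapsto g(t)$ and evaluated at $x$. *)

theory Defs
  imports "HOL-Analysis.Analysis" "HOL-Library.Landau_Symbols"
begin

definition omega_beta :: "real \<Rightarrow> nat \<Rightarrow> real \<Rightarrow> real" where
  "omega_beta \<beta> v u = u * (u + real v * \<beta>) ^ (v - 1) * exp (- (u + real v * \<beta>)) / fact v"

definition jb_p :: "nat \<Rightarrow> nat \<Rightarrow> real \<Rightarrow> real \<Rightarrow> real" where
  "jb_p n k c t = c * (Gamma (real n / c + real k) / (Gamma (real k + 1) * Gamma (real n / c)))
      * ((c * t) ^ k / (1 + c * t) powr (real n / c + real k))"

definition r_n :: "nat \<Rightarrow> real \<Rightarrow> real \<Rightarrow> real \<Rightarrow> real" where
  "r_n n c \<beta> x = (real n - 2 * c) * (1 - \<beta>) * x / real n"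

text \<open>King-type modified Jain-Baskakov operator; the sum index v ranges over v \<ge> 1,
  written as Suc v with v \<ge> 0, so that p_{n,(Suc v)-1,c} = jb_p n v c.\<close>
definition D_op :: "nat \<Rightarrow> real \<Rightarrow> real \<Rightarrow> (real \<Rightarrow> real) \<Rightarrow> real \<Rightarrow> real" where
  "D_op n c \<beta> f x =
     (real n - c) / c * (\<Sum>v. omega_beta \<beta> (Suc v) (real n * r_n n c \<beta> x)
                              * integral {0..} (\<lambda>t. jb_p n v c t * f t))
     + exp (- (real n * r_n n c \<beta> x)) * f 0"

end

theory Submission
  imports Defs
begin


lemma lim_einf: "((F \<circ> real_of_ereal) \<longlongrightarrow> B) (at_left (\<infinity>::ereal)) \<longleftrightarrow> (F \<longlongrightarrow> B) at_top"
  by (rule ereal_tendsto_simps1)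
lemma lim_e0: "((F \<circ> real_of_ereal) \<longlongrightarrow> B) (at_right (0::ereal)) \<longleftrightarrow> (F \<longlongrightarrow> B) (at_right 0)"
  using ereal_tendsto_simps1(2)[of F B 0] by (simp add: zero_ereal_def)

lemma deriv_lin_powr:
  fixes c r t :: real
  assumes "1 + c*t > 0"
  shows "((\<lambda>t. (1 + c*t) powr r) has_real_derivative r * (1 + c*t) powr (r - 1) * c) (at t)"
proof -
  have "DERIV (\<lambda>t. 1 + c*t) t :> c" by (auto intro!: derivative_eq_intros)
  from DERIV_fun_powr[OF this assms, of r] show ?thesis by simp
qed

lemma ib_base:
  fixes c q :: real
  assumes c: "c > 0" and q: "q > 1"
  shows "set_integrable lborel {0<..} (\<lambda>t. (1 + c*t) powr (-q))"
    "(LINT t:{0<..}|lborel. (1 + c*t) powr (-q)) = 1 / (c * (q - 1))"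
proof -
  define F where "F t = - ((1 + c*t) powr (1 - q)) / (c * (q - 1))" for t
  have D: "DERIV F t :> (1 + c*t) powr (-q)" if "0 < ereal t" for t
  proof -
    have t: "t > 0" using that by (simp add: zero_ereal_def)
    have p: "1 + c*t > 0" using t c by (simp add: add_pos_pos)
    have dp: "DERIV (\<lambda>x. x^Suc p) t :> real (Suc p) * t^p"
      using DERIV_pow[of "Suc p" t] by simp
    have "DERIV F t :> - ((1 - q) * (1 + c*t) powr (1 - q - 1) * c) / (c * (q - 1))"
      unfolding F_def by (intro DERIV_cdivide DERIV_minus deriv_lin_powr p)
    moreover have "- ((1 - q) * (1 + c*t) powr (1 - q - 1) * c) / (c * (q - 1)) = (1 + c*t) powr (-q)"
      using c q by (simp add: field_simps)
    ultimately show ?thesis by simp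
  qed
  have C: "isCont (\<lambda>t. (1 + c*t) powr (-q)) t" if "0 < ereal t" for t
  proof -
    have t: "t > 0" using that by (simp add: zero_ereal_def)
    have p: "1 + c*t > 0" using t c by (simp add: add_pos_pos)
    show ?thesis using p by (auto intro!: continuous_intros)
  qed
  have A: "((F \<circ> real_of_ereal) \<longlongrightarrow> -1/(c*(q-1))) (at_right (0::ereal))"
    unfolding lim_e0 F_def
    by (rule tendsto_eq_intros refl)+ (use c q in \<open>auto intro!: tendsto_eq_intros\<close>)
  have lim: "((\<lambda>t. (1 + c*t) powr (1 - q)) \<longlongrightarrow> 0) at_top"
    by (rule tendsto_neg_powr) (use q c in \<open>auto intro!: filterlim_tendsto_add_at_top filterlim_tendsto_pos_mult_at_top filterlim_ident\<close>)
  have B: "((F \<circ> real_of_ereal) \<longlongrightarrow> 0) (at_left (\<infinity>::ereal))"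
    unfolding lim_einf F_def using tendsto_divide[OF tendsto_minus[OF lim], of "\<lambda>_. c*(q-1)" "c*(q-1)"] c q
    by simp
  note R = interval_integral_FTC_nonneg[of 0 \<infinity> F "\<lambda>t. (1 + c*t) powr (-q)", OF _ D C _ A B]
  show "set_integrable lborel {0<..} (\<lambda>t. (1 + c*t) powr (-q))"
    using R(1) by (simp add: zero_ereal_def)
  have "(LBINT t=0..\<infinity>. (1 + c*t) powr (-q)) = 1 / (c * (q - 1))"
    using R(2) by simp
  then show "(LINT t:{0<..}|lborel. (1 + c*t) powr (-q)) = 1 / (c * (q - 1))"
    by (simp add: interval_lebesgue_integral_le_eq zero_ereal_def)
qed

lemma ib_step:
  fixes c q :: real and p :: nat
  assumes c: "c > 0" and q: "q > real p + 2"
    and IH1: "set_integrable lborel {0<..} (\<lambda>t. t^p * (1 + c*t) powr (-(q-1)))"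
    and IH2: "(LINT t:{0<..}|lborel. t^p * (1 + c*t) powr (-(q-1))) = I0"
  shows "set_integrable lborel {0<..} (\<lambda>t. t^Suc p * (1 + c*t) powr (-q))"
    "(LINT t:{0<..}|lborel. t^Suc p * (1 + c*t) powr (-q)) = (real p + 1) / (c * (q - 1)) * I0"
proof -
  define g where "g t = t^Suc p * (1 + c*t) powr (-q)" for t
  define h where "h t = t^p * (1 + c*t) powr (-(q-1))" for t
  have gh: "norm (g t) \<le> norm (h t / c)" if "t \<in> {0<..}" for t
  proof -
    have t: "t > 0" using that by simp
    have p: "1 + c*t > 0" using t c by (simp add: add_pos_pos)
    have "(1 + c*t) powr (-(q-1)) = (1 + c*t) powr (1 + -q)" by simp
    also have "\<dots> = (1 + c*t) * (1 + c*t) powr (-q)"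
      using p by (simp only: powr_add powr_one)
    finally have "(1 + c*t) powr (-(q-1)) = (1 + c*t) * (1 + c*t) powr (-q)" .
    hence e1: "h t / c = t^p * ((1 + c*t)/c) * (1 + c*t) powr (-q)" unfolding h_def by simp
    have e2: "g t = t^p * t * (1 + c*t) powr (-q)" unfolding g_def by simp
    have "t \<le> (1 + c*t)/c" using c by (simp add: field_simps)
    hence ineq: "t^p * t * (1 + c*t) powr (-q) \<le> t^p * ((1 + c*t)/c) * (1 + c*t) powr (-q)"
      using t by (intro mult_right_mono mult_left_mono) auto
    have "g t \<le> h t / c" unfolding e1 e2 by (rule ineq)
    moreover have "g t \<ge> 0" unfolding g_def using t by simp
    ultimately show ?thesis using c by (simp add: abs_of_nonneg) (smt (verit) divide_right_mono)
  qed
  have hc: "set_integrable lborel {0<..} (\<lambda>t. h t / c)"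
    using IH1 unfolding h_def by (simp add: set_integrable_divide)
  have gm: "set_borel_measurable lborel {0<..} g"
    unfolding g_def set_borel_measurable_def by measurable
  show G: "set_integrable lborel {0<..} (\<lambda>t. t^Suc p * (1 + c*t) powr (-q))"
    using set_integrable_bound[OF hc gm AE_I2] gh unfolding g_def by blast
  define F where "F t = t^Suc p * (1 + c*t) powr (-(q-1))" for t
  define f where "f t = (real p + 1) * h t - c * (q - 1) * g t" for t
  have D: "(F has_vector_derivative f t) (at t)" if "0 < ereal t" "ereal t < \<infinity>" for t
  proof -
    have t: "t > 0" using that by (simp add: zero_ereal_def)
    have p: "1 + c*t > 0" using t c by (simp add: add_pos_pos)
    have dp: "DERIV (\<lambda>x. x^Suc p) t :> real (Suc p) * t^p"
      using DERIV_pow[of "Suc p" t] by simp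
    have "DERIV F t :> (real (Suc p) * t^p) * (1 + c*t) powr (-(q-1)) + (-(q-1) * (1 + c*t) powr (-(q-1) - 1) * c) * t^Suc p"
      unfolding F_def by (rule DERIV_mult[OF dp deriv_lin_powr[OF p]])
    moreover have "(real (Suc p) * t^p) * (1 + c*t) powr (-(q-1)) + (-(q-1) * (1 + c*t) powr (-(q-1) - 1) * c) * t^Suc p = f t"
      unfolding f_def g_def h_def by (simp add: algebra_simps)
    ultimately show ?thesis by (simp add: has_real_derivative_iff_has_vector_derivative)
  qed
  have C: "isCont f t" if "0 < ereal t" "ereal t < \<infinity>" for t
  proof -
    have t: "t > 0" using that by (simp add: zero_ereal_def)
    have p: "1 + c*t > 0" using t c by (simp add: add_pos_pos)
    show ?thesis unfolding f_def g_def h_def using p by (auto intro!: continuous_intros)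
  qed
  have fi: "set_integrable lborel (einterval 0 \<infinity>) f"
    unfolding f_def using IH1 G unfolding g_def h_def by (simp add: zero_ereal_def)
  have A: "((F \<circ> real_of_ereal) \<longlongrightarrow> 0) (at_right (0::ereal))"
    unfolding lim_e0 F_def
    by (rule tendsto_eq_intros refl)+ (use c q in \<open>auto intro!: tendsto_eq_intros\<close>)
  have lim: "((\<lambda>t. (1/c)^Suc p * (1 + c*t) powr (real p + 2 - q)) \<longlongrightarrow> 0) at_top"
  proof -
    have fl: "filterlim (\<lambda>t. 1 + c*t) at_top at_top"
      by (intro filterlim_tendsto_add_at_top[OF tendsto_const] filterlim_tendsto_pos_mult_at_top[OF tendsto_const c filterlim_ident])
    show ?thesis
      using tendsto_mult_left[OF tendsto_neg_powr[of "real p + 2 - q" "\<lambda>t. 1 + c*t" at_top, OF _ fl], of "(1/c)^Suc p"] q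
      by simp
  qed
  have ev: "eventually (\<lambda>t. F t \<le> (1/c)^Suc p * (1 + c*t) powr (real p + 2 - q) \<and> 0 \<le> F t) at_top"
    using eventually_gt_at_top[of 0]
  proof eventually_elim
    case (elim t)
    have p: "1 + c*t > 0" using elim c by (simp add: add_pos_pos)
    have rp: "(1 + c*t)^Suc p = (1 + c*t) powr real (Suc p)"
      using p by (simp only: powr_realpow)
    have ra: "(1 + c*t) powr real (Suc p) * (1 + c*t) powr (-(q-1)) = (1 + c*t) powr (real p + 2 - q)"
      using p by (simp add: powr_add[symmetric] algebra_simps)
    have "t \<le> (1 + c*t)/c" using c by (simp add: field_simps)
    hence "t^Suc p \<le> ((1 + c*t)/c)^Suc p" using elim by (intro power_mono) auto
    hence "F t \<le> ((1 + c*t)/c)^Suc p * (1 + c*t) powr (-(q-1))"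
      unfolding F_def by (intro mult_right_mono) auto
    also have "\<dots> = (1/c)^Suc p * ((1 + c*t)^Suc p * (1 + c*t) powr (-(q-1)))"
      by (simp add: power_divide)
    also have "\<dots> = (1/c)^Suc p * (1 + c*t) powr (real p + 2 - q)"
      unfolding rp ra ..
    finally show ?case unfolding F_def using elim by simp
  qed
  have B: "((F \<circ> real_of_ereal) \<longlongrightarrow> 0) (at_left (\<infinity>::ereal))"
    unfolding lim_einf
    by (rule tendsto_sandwich[of "\<lambda>_. 0", OF _ _ tendsto_const lim]) (use ev in \<open>auto elim: eventually_mono\<close>)
  have "(LBINT t=0..\<infinity>. f t) = 0 - 0"
    by (rule interval_integral_FTC_integrable[OF _ D C fi A B]) auto
  hence "(LINT t:{0<..}|lborel. f t) = 0"
    by (simp add: interval_lebesgue_integral_le_eq zero_ereal_def)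
  moreover have "(LINT t:{0<..}|lborel. f t) = (real p + 1) * I0 - c * (q - 1) * (LINT t:{0<..}|lborel. g t)"
    unfolding f_def using IH1 IH2 G unfolding g_def h_def
    by (subst set_integral_diff) auto
  ultimately show "(LINT t:{0<..}|lborel. t^Suc p * (1 + c*t) powr (-q)) = (real p + 1) / (c * (q - 1)) * I0"
    using c q unfolding g_def by (simp add: field_simps)
qed

lemma G1: "(x::real) > 0 \<Longrightarrow> Gamma (x + 1) = x * Gamma x"
  by (rule Gamma_plus1) (auto dest: nonpos_Ints_nonpos)

lemma ib_all:
  fixes c q :: real and p :: nat
  assumes c: "c > 0" and q: "q > real p + 1"
  shows "set_integrable lborel {0<..} (\<lambda>t. t^p * (1 + c*t) powr (-q)) \<and>
     (LINT t:{0<..}|lborel. t^p * (1 + c*t) powr (-q)) = Gamma (real p + 1) * Gamma (q - real p - 1) / (c^(p+1) * Gamma q)"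
  using q
proof (induction p arbitrary: q)
  case 0
  have "Gamma q = (q - 1) * Gamma (q - 1)" using G1[of "q-1"] 0 by simp
  moreover have "Gamma (q - 1) > 0" using 0 by simp
  ultimately have "Gamma (real 0 + 1) * Gamma (q - real 0 - 1) / (c^(0+1) * Gamma q) = 1 / (c * (q - 1))"
    by simp
  then show ?case using ib_base[OF c, of q] 0 by simp
next
  case (Suc p)
  have q1: "q - 1 > real p + 1" using Suc.prems by simp
  note IH = Suc.IH[OF q1]
  have "q > real p + 2" using Suc.prems by simp
  note S = ib_step[OF c this IH[THEN conjunct1] IH[THEN conjunct2]]
  have g1: "Gamma q = (q - 1) * Gamma (q - 1)" using G1[of "q-1"] Suc.prems by simp
  have g2: "Gamma (real (Suc p) + 1) = (real p + 1) * Gamma (real p + 1)" using G1[of "real p + 1"] by simp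
  have "Gamma (q - 1) > 0" using Suc.prems by simp
  have e: "q - 1 - real p - 1 = q - real (Suc p) - 1" by simp
  have val: "(real p + 1) / (c * (q - 1)) * (Gamma (real p + 1) * Gamma (q - 1 - real p - 1) / (c^(p+1) * Gamma (q - 1)))
     = Gamma (real (Suc p) + 1) * Gamma (q - real (Suc p) - 1) / (c^(Suc p+1) * Gamma q)"
    unfolding g1 g2 e using \<open>Gamma (q - 1) > 0\<close> c Suc.prems by (simp add: field_simps)
  show ?case using S val by simp
qed

lemma ib_henstock:
  fixes c q :: real and p :: nat
  assumes c: "c > 0" and q: "q > real p + 1"
  shows "((\<lambda>t. t^p * (1 + c*t) powr (-q)) has_integral
           Gamma (real p + 1) * Gamma (q - real p - 1) / (c^(p+1) * Gamma q)) {0<..}"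
proof -
  note I = ib_all[OF c q]
  from set_borel_integral_eq_integral[OF I[THEN conjunct1]] I[THEN conjunct2]
  show ?thesis by (simp add: has_integral_integral)
qed

lemma jb_moment:
  fixes c :: real and n k m :: nat
  assumes c: "c > 0" and n: "real n > (real m + 1) * c"
  shows "((\<lambda>t. jb_p n k c t * t^m) has_integral
     Gamma (real k + real m + 1) * Gamma (real n / c - real m - 1) / (c^m * Gamma (real k + 1) * Gamma (real n / c))) {0..}"
proof -
  define N where "N = real n / c"
  have N: "N > real m + 1" using n c unfolding N_def by (simp add: field_simps)
  define q where "q = N + real k"
  have q: "q > real (k + m) + 1" using N unfolding q_def by simp
  define K where "K = c * (Gamma (N + real k) / (Gamma (real k + 1) * Gamma N)) * c^k"
  note H = has_integral_mult_right[OF ib_henstock[OF c q], of K]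
  have eqf: "K * (t^(k+m) * (1 + c*t) powr (-q)) = jb_p n k c t * t^m" if "t \<in> {0<..}" for t
  proof -
    have pm: "(1 + c*t) powr (-q) = inverse ((1 + c*t) powr q)" by (rule powr_minus)
    show ?thesis unfolding pm unfolding jb_p_def K_def q_def N_def
      by (simp add: power_mult_distrib power_add divide_inverse algebra_simps)
  qed
  have H2: "((\<lambda>t. jb_p n k c t * t^m) has_integral
      K * (Gamma (real (k+m) + 1) * Gamma (q - real (k+m) - 1) / (c^(k+m+1) * Gamma q))) {0<..}"
    by (rule has_integral_eq[OF eqf H])
  have H3: "((\<lambda>t. jb_p n k c t * t^m) has_integral
      K * (Gamma (real (k+m) + 1) * Gamma (q - real (k+m) - 1) / (c^(k+m+1) * Gamma q))) {0..}"
    by (rule has_integral_spike_set_eq[THEN iffD1, OF _ _ H2]) (auto intro: negligible_subset[of "{0}"])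
  have Nk: "Gamma (N + real k) > 0" "Gamma N > 0" "Gamma (real k + 1) > 0" using N by auto
  have "K * (Gamma (real (k+m) + 1) * Gamma (q - real (k+m) - 1) / (c^(k+m+1) * Gamma q))
      = Gamma (real k + real m + 1) * Gamma (N - real m - 1) / (c^m * Gamma (real k + 1) * Gamma N)"
    unfolding K_def q_def using Nk c by (simp add: power_add field_simps)
  then show ?thesis using H3 unfolding N_def by simp
qed


definition AA :: "real \<Rightarrow> real \<Rightarrow> nat \<Rightarrow> real" where
  "AA a y k = (if k = 0 then 1 else y * (y + real k * a) ^ (k - 1))"

lemma AA_0 [simp]: "AA a y 0 = 1" by (simp add: AA_def)
lemma AA_at0: "k > 0 \<Longrightarrow> AA a 0 k = 0" by (simp add: AA_def)

lemma AA_deriv: "DERIV (\<lambda>x. AA a x k) x :> real k * AA a (x + a) (k - 1)"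
proof (cases k)
  case 0
  then show ?thesis by (simp add: AA_def)
next
  case (Suc m)
  define X where "X = x + real (Suc m) * a"
  have d: "DERIV (\<lambda>x. x * (x + real (Suc m) * a) ^ m) x :> 1 * X ^ m + (real m * X ^ (m - 1) * 1) * x"
    unfolding X_def
    by (rule DERIV_mult DERIV_ident DERIV_pow derivative_eq_intros refl | simp)+
  have e: "1 * X ^ m + (real m * X ^ (m - 1) * 1) * x = real (Suc m) * AA a (x + a) m"
  proof (cases m)
    case 0 then show ?thesis by (simp add: AA_def)
  next
    case (Suc j)
    have "X = x + a + real (Suc j) * a" unfolding X_def using Suc by (simp add: algebra_simps)
    then show ?thesis using Suc by (simp add: AA_def algebra_simps)
  qed
  show ?thesis using d unfolding e Suc by (simp add: AA_def)
qed

lemma abel_binom: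
  "(\<Sum>k\<le>n. real (n choose k) * AA a x k * AA a y (n - k)) = AA a (x + y) n"
proof (induction n arbitrary: x y)
  case 0
  then show ?case by simp
next
  case (Suc m)
  define L where "L x = (\<Sum>k\<le>Suc m. real (Suc m choose k) * AA a x k * AA a y (Suc m - k))" for x
  define h where "h x = L x - AA a (x + y) (Suc m)" for x
  have dL: "DERIV L x :> (\<Sum>k\<le>Suc m. real (Suc m choose k) * (real k * AA a (x + a) (k - 1)) * AA a y (Suc m - k))" for x
    unfolding L_def
    by (intro DERIV_sum DERIV_cmult_right DERIV_cmult AA_deriv)
  have shift: "(\<Sum>k\<le>Suc m. real (Suc m choose k) * (real k * AA a (x + a) (k - 1)) * AA a y (Suc m - k))
      = real (Suc m) * (\<Sum>k\<le>m. real (m choose k) * AA a (x + a) k * AA a y (m - k))" for x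
  proof -
    have "(\<Sum>k\<le>Suc m. real (Suc m choose k) * (real k * AA a (x + a) (k - 1)) * AA a y (Suc m - k))
       = (\<Sum>k\<le>m. real (Suc m choose Suc k) * (real (Suc k) * AA a (x + a) k) * AA a y (m - k))"
      by (subst sum.atMost_Suc_shift) simp
    also have "\<dots> = (\<Sum>k\<le>m. real (Suc m) * (real (m choose k) * AA a (x + a) k * AA a y (m - k)))"
    proof (rule sum.cong[OF refl])
      fix k
      have "real (Suc k) * real (Suc m choose Suc k) = real (Suc m) * real (m choose k)"
        using Suc_times_binomial[of k m] by (metis of_nat_mult)
      then show "real (Suc m choose Suc k) * (real (Suc k) * AA a (x + a) k) * AA a y (m - k)
          = real (Suc m) * (real (m choose k) * AA a (x + a) k * AA a y (m - k))"
        by (metis (no_types, lifting) mult.assoc mult.left_commute)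
    qed
    finally show ?thesis by (simp add: sum_distrib_left)
  qed
  have dR: "DERIV (\<lambda>x. AA a (x + y) (Suc m)) x :> real (Suc m) * AA a (x + y + a) m" for x
  proof -
    have g: "DERIV (\<lambda>x. x + y) x :> 1" by (auto intro!: derivative_eq_intros)
    from DERIV_chain2[where f="\<lambda>x. AA a x (Suc m)" and g="\<lambda>x. x + y", OF AA_deriv g]
    show ?thesis by simp
  qed
  have dh: "DERIV h x :> 0" for x
  proof -
    have "DERIV h x :> real (Suc m) * AA a (x + a + y) m - real (Suc m) * AA a (x + y + a) m"
      unfolding h_def using DERIV_diff[OF dL dR] unfolding shift Suc.IH .
    then show ?thesis by (simp add: algebra_simps)
  qed
  have "h x = h 0" using DERIV_isconst_all[of h x 0] dh by blast
  moreover have "L 0 = AA a y (Suc m)"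
    unfolding L_def by (subst sum.atMost_shift) (simp add: AA_at0)
  ultimately have "h x = 0" unfolding h_def by simp
  then show ?case unfolding h_def L_def by simp
qed

lemma pow_fact_le_exp: "(x::real) \<ge> 0 \<Longrightarrow> x^n / fact n \<le> exp x"
proof -
  assume x: "x \<ge> 0"
  have s: "(\<lambda>k. x^k / fact k) sums exp x" using exp_converges[of x] by (simp add: divide_inverse_commute)
  have "sum (\<lambda>k. x^k / fact k) {n} \<le> suminf (\<lambda>k. x^k / fact k)"
    by (rule sum_le_suminf) (use s x in \<open>auto simp: sums_iff\<close>)
  then show ?thesis using s by (simp add: sums_iff)
qed

lemma AA_abs_le: "\<bar>y\<bar> \<le> Y \<Longrightarrow> a \<ge> 0 \<Longrightarrow> \<bar>AA a y n\<bar> \<le> (Y + real n * a) ^ n"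
proof (cases n)
  case 0 then show ?thesis by simp
next
  case (Suc m)
  assume y: "\<bar>y\<bar> \<le> Y" and a: "a \<ge> 0"
  have na: "real n * a \<ge> 0" using a by simp
  have h1: "\<bar>y\<bar> \<le> Y + real n * a" using y na by linarith
  have h2: "\<bar>y + real n * a\<bar> \<le> Y + real n * a" using y na by linarith
  have "\<bar>AA a y n\<bar> = \<bar>y\<bar> * \<bar>y + real n * a\<bar> ^ m" using Suc by (simp add: AA_def abs_mult power_abs)
  also have "\<dots> \<le> (Y + real n * a) * (Y + real n * a) ^ m"
    using h1 by (intro mult_mono power_mono h1 h2) auto
  finally show ?thesis using Suc by simp
qed

lemma big_summable:
  fixes a z Y :: real
  assumes a: "a \<ge> 0" and z: "z \<ge> 0" and az: "a * z * exp 1 < 1" and Y: "Y \<ge> 0"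
  shows "summable (\<lambda>n. (Y + real n * a) ^ n / fact n * z ^ n)"
proof (cases "a = 0")
  case True
  then show ?thesis using summable_exp[of "Y * z"] by (simp add: power_mult_distrib divide_inverse mult_ac)
next
  case False
  hence a: "a > 0" using a by simp
  have b: "(Y + real n * a) ^ n / fact n * z ^ n \<le> exp (Y / a) * (a * exp 1 * z) ^ n" for n
  proof -
    have p1: "(Y + real n * a) ^ n \<le> exp (Y / a) * (real n * a) ^ n"
    proof (cases "n = 0")
      case True then show ?thesis using Y a by simp
    next
      case False
      hence na: "real n * a > 0" using a by simp
      have nz: "real n * a \<noteq> 0" using na by linarith
      have "real n * a * (Y / (real n * a)) = Y"
        by (rule times_divide_eq_right[THEN trans], rule nonzero_mult_div_cancel_left[OF nz])
      hence "Y + real n * a = real n * a * (1 + Y / (real n * a))" by (simp add: distrib_left)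
      also have "\<dots> \<le> real n * a * exp (Y / (real n * a))"
        using na by (intro mult_left_mono) auto
      finally have "(Y + real n * a) ^ n \<le> (real n * a * exp (Y / (real n * a))) ^ n"
        using Y na by (intro power_mono) auto
      also have "\<dots> = (real n * a) ^ n * exp (Y / (real n * a)) ^ n"
        by (simp only: power_mult_distrib)
      also have "exp (Y / (real n * a)) ^ n = exp (real n * (Y / (real n * a)))"
        by (simp only: exp_of_nat_mult)
      also have "real n * (Y / (real n * a)) = Y / a" using False a by (simp add: field_simps)
      finally show ?thesis by (simp add: mult_ac)
    qed
    have p2: "(real n * a) ^ n / fact n \<le> (a * exp 1) ^ n"
    proof -
      have "real n ^ n / fact n \<le> exp (real n)" by (rule pow_fact_le_exp) simp
      also have "exp (real n) = exp 1 ^ n" using exp_of_nat_mult[of n 1] by simp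
      finally have "real n ^ n / fact n \<le> exp 1 ^ n" .
      hence "a ^ n * (real n ^ n / fact n) \<le> a ^ n * exp 1 ^ n"
        using a by (intro mult_left_mono) auto
      moreover have "(real n * a) ^ n / fact n = a ^ n * (real n ^ n / fact n)"
        by (simp only: power_mult_distrib mult.commute times_divide_eq_right)
      moreover have "(a * exp 1) ^ n = a ^ n * exp 1 ^ n" by (rule power_mult_distrib)
      ultimately show ?thesis by simp
    qed
    have "(Y + real n * a) ^ n / fact n * z ^ n \<le> exp (Y / a) * ((real n * a) ^ n / fact n) * z ^ n"
      using p1 z by (intro mult_right_mono) (auto simp: divide_right_mono)
    also have "\<dots> \<le> exp (Y / a) * (a * exp 1) ^ n * z ^ n"
      using p2 z by (intro mult_right_mono mult_left_mono) auto
    finally show ?thesis by (simp add: power_mult_distrib mult_ac)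
  qed
  have g: "summable (\<lambda>n. exp (Y / a) * (a * exp 1 * z) ^ n)"
    using az a z by (intro summable_mult summable_geometric) (simp add: mult_ac)
  show ?thesis
  proof (rule summable_comparison_test[OF _ g], intro exI allI impI)
    fix n
    have "0 \<le> (Y + real n * a) ^ n / fact n * z ^ n" using Y a z by (auto intro!: add_nonneg_nonneg)
    then show "norm ((Y + real n * a) ^ n / fact n * z ^ n) \<le> exp (Y / a) * (a * exp 1 * z) ^ n"
      using b[of n] by simp
  qed
qed

definition cf :: "real \<Rightarrow> real \<Rightarrow> nat \<Rightarrow> real" where
  "cf a y n = AA a y n / fact n"

lemma cf_abs_summable:
  fixes a z y :: real
  assumes a: "a \<ge> 0" and z: "z \<ge> 0" and az: "a * z * exp 1 < 1" and Y: "\<bar>y\<bar> \<le> Y"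
  shows "summable (\<lambda>n. \<bar>cf a y n\<bar> * z ^ n)"
proof (rule summable_comparison_test[OF _ big_summable[OF a z az, of Y]], intro exI allI impI)
  fix n
  have "\<bar>cf a y n\<bar> \<le> (Y + real n * a) ^ n / fact n"
    unfolding cf_def using AA_abs_le[OF Y a, of n] by (simp add: divide_right_mono)
  then show "norm (\<bar>cf a y n\<bar> * z ^ n) \<le> (Y + real n * a) ^ n / fact n * z ^ n"
  proof -
    have m: "\<bar>cf a y n\<bar> * z ^ n \<le> (Y + real n * a) ^ n / fact n * z ^ n"
      by (rule mult_right_mono[OF \<open>\<bar>cf a y n\<bar> \<le> _\<close>]) (use z in simp)
    have "norm (\<bar>cf a y n\<bar> * z ^ n) = \<bar>cf a y n\<bar> * z ^ n" using z by simp
    with m show ?thesis by linarith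
  qed
qed (use Y in auto)

definition Efps :: "real \<Rightarrow> real \<Rightarrow> real fps" where
  "Efps a y = Abs_fps (cf a y)"

lemma Efps_radius:
  fixes a z y :: real
  assumes a: "a \<ge> 0" and z: "z \<ge> 0" and az: "a * z * exp 1 < 1"
  shows "ereal z < fps_conv_radius (Efps a y)"
proof -
  obtain z' where z': "z < z'" "a * z' * exp 1 < 1"
  proof (cases "a = 0")
    case True then show ?thesis using that[of "z+1"] by simp
  next
    case False
    hence a': "a * exp 1 > 0" using a by simp
    define z' where "z' = (z + 1 / (a * exp 1)) / 2"
    have "z * (a * exp 1) = a * z * exp 1" by (simp add: algebra_simps)
    hence "z * (a * exp 1) < 1" using az by linarith
    hence lt: "z < 1 / (a * exp 1)" using pos_less_divide_eq[OF a'] by blast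
    have z'1: "z < z'" using lt unfolding z'_def by simp
    have z'2: "z' < 1 / (a * exp 1)" using lt unfolding z'_def by simp
    hence "z' * (a * exp 1) < 1" using pos_less_divide_eq[OF a'] by blast
    moreover have "z' * (a * exp 1) = a * z' * exp 1" by (simp add: algebra_simps)
    ultimately have "a * z' * exp 1 < 1" by linarith
    then show ?thesis using that z'1 by blast
  qed
  have z'0: "z' \<ge> 0" using z z' by simp
  have "summable (\<lambda>n. \<bar>cf a y n\<bar> * z' ^ n)"
    by (rule cf_abs_summable[OF a z'0 z'(2) order.refl])
  moreover have "\<bar>cf a y n * z' ^ n\<bar> = \<bar>cf a y n\<bar> * z' ^ n" for n
    using z'0 by (simp add: abs_mult)
  ultimately have "summable (\<lambda>n. \<bar>cf a y n * z' ^ n\<bar>)" by simp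
  hence "summable (\<lambda>n. cf a y n * z' ^ n)" by (rule summable_rabs_cancel)
  hence "conv_radius (cf a y) \<ge> norm z'" by (rule conv_radius_geI)
  hence c: "ereal z' \<le> fps_conv_radius (Efps a y)"
    using z'0 by (simp add: fps_conv_radius_def Efps_def)
  have "ereal z < ereal z'" using z' by simp
  then show ?thesis using c by (rule less_le_trans)
qed

definition okz :: "real \<Rightarrow> real \<Rightarrow> bool" where
  "okz a z \<longleftrightarrow> 0 \<le> z \<and> a * z * exp 1 < 1"

lemma Efps_mult: "Efps a x * Efps a y = Efps a (x + y)"
proof (rule fps_ext)
  fix n
  have "fps_nth (Efps a x * Efps a y) n = (\<Sum>i=0..n. cf a x i * cf a y (n - i))"
    by (simp add: fps_mult_nth Efps_def)
  also have "\<dots> = (\<Sum>i\<le>n. real (n choose i) * AA a x i * AA a y (n - i)) / fact n"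
    unfolding sum_divide_distrib atLeast0AtMost
  proof (rule sum.cong[OF refl])
    fix i assume "i \<in> {..n}"
    hence i: "i \<le> n" by simp
    show "cf a x i * cf a y (n - i) = real (n choose i) * AA a x i * AA a y (n - i) / fact n"
      unfolding cf_def binomial_fact[OF i] by (simp add: field_simps)
  qed
  also have "\<dots> = cf a (x + y) n" unfolding abel_binom cf_def ..
  finally show "fps_nth (Efps a x * Efps a y) n = fps_nth (Efps a (x + y)) n" by (simp add: Efps_def)
qed

lemma okz_radius: "a \<ge> 0 \<Longrightarrow> okz a z \<Longrightarrow> ereal (norm z) < fps_conv_radius (Efps a y)"
  using Efps_radius[of a z y] by (simp add: okz_def)

definition phi :: "real \<Rightarrow> real \<Rightarrow> real \<Rightarrow> real" where
  "phi a z y = eval_fps (Efps a y) z"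

lemma phi_add: "a \<ge> 0 \<Longrightarrow> okz a z \<Longrightarrow> phi a z (x + y) = phi a z x * phi a z y"
  unfolding phi_def Efps_mult[symmetric] by (rule eval_fps_mult; rule okz_radius)

lemma Efps_0: "Efps a 0 = 1"
  by (rule fps_ext) (simp add: Efps_def cf_def AA_def)

lemma phi_0: "phi a z 0 = 1" by (simp add: phi_def Efps_0)

definition Gc :: "real \<Rightarrow> real \<Rightarrow> nat \<Rightarrow> real" where
  "Gc a h n = (if n = 0 then 0 else (h + real n * a) ^ (n - 1) / fact n)"

definition gfun :: "real \<Rightarrow> real \<Rightarrow> real \<Rightarrow> real" where
  "gfun a z h = (\<Sum>n. Gc a h n * z ^ n)"

lemma Gc_bound: "a \<ge> 0 \<Longrightarrow> \<bar>h\<bar> \<le> 1 \<Longrightarrow> \<bar>Gc a h n\<bar> \<le> \<bar>cf a 1 n\<bar>"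
proof (cases n)
  case 0 then show ?thesis by (simp add: Gc_def)
next
  case (Suc m)
  assume a: "a \<ge> 0" and h: "\<bar>h\<bar> \<le> 1"
  have na: "real n * a \<ge> 0" using a by simp
  have "\<bar>h + real n * a\<bar> \<le> 1 + real n * a" using na h unfolding abs_le_iff by linarith
  hence "\<bar>h + real n * a\<bar> ^ m \<le> (1 + real n * a) ^ m" by (intro power_mono) auto
  then show ?thesis using Suc a by (simp add: Gc_def cf_def AA_def power_abs divide_right_mono)
qed

lemma Gc_summable:
  assumes a: "a \<ge> 0" and z: "okz a z" and h: "\<bar>h\<bar> \<le> 1"
  shows "summable (\<lambda>n. Gc a h n * z ^ n)"
proof (rule summable_comparison_test[OF _ cf_abs_summable[of a z 1 1]], intro exI allI impI)
  fix n
  show "norm (Gc a h n * z ^ n) \<le> \<bar>cf a 1 n\<bar> * z ^ n"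
    using Gc_bound[OF a h, of n] z unfolding okz_def by (simp add: abs_mult mult_right_mono)
qed (use a z in \<open>auto simp: okz_def\<close>)

lemma phi_eq_g: 
  assumes a: "a \<ge> 0" and z: "okz a z" and h: "\<bar>h\<bar> \<le> 1"
  shows "phi a z h = 1 + h * gfun a z h"
proof -
  have s1: "(\<lambda>n. cf a h n * z ^ n) sums phi a z h"
    unfolding phi_def using sums_eval_fps[OF okz_radius[OF a z, of h]] by (simp add: Efps_def)
  have s0: "(\<lambda>n. if n = 0 then 1 else 0::real) sums 1"
    using sums_single[of 0 "\<lambda>_. 1::real"] by simp
  have s2: "(\<lambda>n. (if n = 0 then 1 else 0) + h * (Gc a h n * z ^ n)) sums (1 + h * gfun a z h)"
    unfolding gfun_def
    by (intro sums_add s0 sums_mult summable_sums Gc_summable[OF a z h])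
  have "(\<lambda>n. cf a h n * z ^ n) = (\<lambda>n. (if n = 0 then 1 else 0) + h * (Gc a h n * z ^ n))"
    by (rule ext) (auto simp: cf_def Gc_def AA_def)
  with s1 s2 show ?thesis using sums_unique2 by metis
qed

lemma gfun_cont:
  assumes a: "a \<ge> 0" and z: "okz a z"
  shows "continuous_on {-1..1} (gfun a z)"
proof -
  have ul: "uniform_limit {-1..1} (\<lambda>N h. \<Sum>n<N. Gc a h n * z ^ n) (\<lambda>h. \<Sum>n. Gc a h n * z ^ n) sequentially"
  proof (rule Weierstrass_m_test)
    show "summable (\<lambda>n. \<bar>cf a 1 n\<bar> * z ^ n)" by (rule cf_abs_summable) (use a z in \<open>auto simp: okz_def\<close>)
    fix n h assume "h \<in> {-1..(1::real)}"
    hence h: "\<bar>h\<bar> \<le> 1" by auto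
    show "norm (Gc a h n * z ^ n) \<le> \<bar>cf a 1 n\<bar> * z ^ n"
      using Gc_bound[OF a h, of n] z unfolding okz_def by (simp add: abs_mult mult_right_mono)
  qed
  have "continuous_on {-1..1} (\<lambda>h. Gc a h n * z ^ n)" for n
    by (cases n) (auto simp: Gc_def intro!: continuous_intros)
  hence "continuous_on {-1..1} (\<lambda>h. \<Sum>n<N. Gc a h n * z ^ n)" for N
    by (intro continuous_on_sum) auto
  hence "continuous_on {-1..1} (\<lambda>h. \<Sum>n. Gc a h n * z ^ n)"
    by (intro uniform_limit_theorem[OF _ ul]) auto
  then show ?thesis unfolding gfun_def .
qed

lemma phi_deriv:
  assumes a: "a \<ge> 0" and z: "okz a z"
  shows "DERIV (phi a z) x :> phi a z x * gfun a z 0"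
proof -
  have "isCont (gfun a z) 0"
    using gfun_cont[OF a z] by (rule continuous_on_interior) auto
  hence g: "(gfun a z \<longlongrightarrow> gfun a z 0) (at 0)" by (simp add: isCont_def)
  have ev: "eventually (\<lambda>h. phi a z x * gfun a z h = (phi a z (x + h) - phi a z x) / h) (at (0::real))"
  proof -
    have "eventually (\<lambda>h. h \<noteq> 0 \<and> dist h 0 < (1::real)) (at 0)"
      by (auto simp: eventually_at intro!: exI[of _ 1])
    then show ?thesis
    proof (rule eventually_mono)
      fix h :: real assume h: "h \<noteq> 0 \<and> dist h 0 < 1"
      hence h1: "\<bar>h\<bar> \<le> 1" by simp
      have "phi a z (x + h) = phi a z x * phi a z h" by (rule phi_add[OF a z])
      also have "phi a z h = 1 + h * gfun a z h" by (rule phi_eq_g[OF a z h1])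
      finally show "phi a z x * gfun a z h = (phi a z (x + h) - phi a z x) / h"
        using h by (simp add: field_simps)
    qed
  qed
  have "((\<lambda>h. (phi a z (x + h) - phi a z x) / h) \<longlongrightarrow> phi a z x * gfun a z 0) (at 0)"
    using Lim_transform_eventually[OF tendsto_mult_left[OF g, of "phi a z x"] ev] .
  then show ?thesis by (simp add: DERIV_def)
qed

lemma phi_exp:
  assumes a: "a \<ge> 0" and z: "okz a z"
  shows "phi a z y = exp (gfun a z 0 * y)"
proof -
  define g0 where "g0 = gfun a z 0"
  define psi where "psi x = phi a z x * exp (- g0 * x)" for x
  have "DERIV psi x :> 0" for x
  proof -
    have "DERIV psi x :> (phi a z x * g0) * exp (- g0 * x) + (exp (- g0 * x) * (- g0)) * phi a z x"
      unfolding psi_def g0_def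
      by (intro DERIV_mult phi_deriv[OF a z] DERIV_fun_exp derivative_eq_intros) auto
    then show ?thesis by (simp add: algebra_simps)
  qed
  hence "psi y = psi 0" using DERIV_isconst_all by blast
  hence "phi a z y * exp (- g0 * y) = 1" by (simp add: psi_def phi_0)
  hence "phi a z y = exp (g0 * y)" by (simp add: exp_minus field_simps)
  then show ?thesis by (simp add: g0_def)
qed

definition Tfps :: "real \<Rightarrow> real fps" where
  "Tfps a = Abs_fps (Gc a 0)"

definition TT :: "real \<Rightarrow> real \<Rightarrow> real" where
  "TT a z = eval_fps (Tfps a) z"

lemma gfun0_TT: "gfun a z 0 = TT a z"
  by (simp add: gfun_def TT_def eval_fps_def Tfps_def)

lemma Tfps_eq: "Tfps a = fps_X * Efps a a"
proof (rule fps_ext)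
  fix n
  show "fps_nth (Tfps a) n = fps_nth (fps_X * Efps a a) n"
  proof (cases n)
    case 0 then show ?thesis by (simp add: Tfps_def Gc_def)
  next
    case (Suc m)
    show ?thesis
    proof (cases m)
      case 0 then show ?thesis using Suc by (simp add: Tfps_def Gc_def Efps_def cf_def)
    next
      case (Suc j)
      have e: "a + real (Suc j) * a = real (Suc (Suc j)) * a" by (simp add: algebra_simps)
      have "(real (Suc (Suc j)) * a) ^ Suc j / fact (Suc (Suc j))
          = a * (real (Suc (Suc j)) * a) ^ j / fact (Suc j)"
        by (simp add: fact_Suc[of "Suc j"] field_simps del: fact_Suc of_nat_Suc)
      then show ?thesis using \<open>n = Suc m\<close> Suc
        by (simp add: Tfps_def Gc_def Efps_def cf_def AA_def e del: of_nat_Suc)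
    qed
  qed
qed

lemma Tfps_radius: "a \<ge> 0 \<Longrightarrow> okz a z \<Longrightarrow> ereal (norm z) < fps_conv_radius (Tfps a)"
  unfolding Tfps_eq
  using fps_conv_radius_mult[of fps_X "Efps a a"] okz_radius[of a z a]
  by (auto intro: less_le_trans)

lemma TT_eq:
  assumes a: "a \<ge> 0" and z: "okz a z"
  shows "TT a z = z * exp (a * TT a z)"
proof -
  have "TT a z = z * phi a z a"
    unfolding TT_def Tfps_eq phi_def
    by (subst eval_fps_mult) (use okz_radius[OF a z] in auto)
  also have "phi a z a = exp (a * TT a z)"
    using phi_exp[OF a z, of a] by (simp add: gfun0_TT mult.commute)
  finally show ?thesis .
qed

lemma texp_mono:
  fixes u v :: real
  assumes "0 \<le> u" "u < v" "v \<le> 1"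
  shows "u * exp (- u) < v * exp (- v)"
proof (rule DERIV_pos_imp_increasing_open[OF \<open>u < v\<close>])
  fix x assume x: "u < x" "x < v"
  have "DERIV (\<lambda>t. t * exp (- t)) x :> 1 * exp (- x) + (exp (- x) * (- 1)) * x"
    by (intro DERIV_mult DERIV_ident DERIV_fun_exp derivative_eq_intros) auto
  moreover have "1 * exp (- x) + (exp (- x) * (- 1)) * x > 0"
  proof -
    have "1 * exp (- x) + (exp (- x) * (- 1)) * x = exp (- x) * (1 - x)" by (simp add: algebra_simps)
    moreover have "exp (- x) * (1 - x) > 0" using x assms by (intro mult_pos_pos) auto
    ultimately show ?thesis by simp
  qed
  ultimately show "\<exists>y. DERIV (\<lambda>t. t * exp (- t)) x :> y \<and> y > 0" by blast
qed (intro continuous_intros)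

lemma TT_lt:
  assumes a: "a \<ge> 0" and z: "okz a z"
  shows "a * TT a z < 1"
proof (rule ccontr)
  assume "\<not> a * TT a z < 1"
  hence ge: "1 \<le> a * TT a z" by simp
  have z0: "z \<ge> 0" using z by (simp add: okz_def)
  have ok: "okz a t" if "t \<in> {0..z}" for t
  proof -
    have "a * t * exp 1 \<le> a * z * exp 1" using that a by (intro mult_right_mono mult_left_mono) auto
    then show ?thesis using z that unfolding okz_def by auto
  qed
  have "continuous_on {0..z} (TT a)"
    unfolding TT_def
  proof (rule continuous_on_subset[OF continuous_on_eval_fps])
    show "{0..z} \<subseteq> eball 0 (fps_conv_radius (Tfps a))"
      using Tfps_radius[OF a ok] by auto
  qed
  hence c: "continuous_on {0..z} (\<lambda>t. a * TT a t)" by (intro continuous_intros)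
  have "TT a 0 = 0" using TT_eq[OF a, of 0] by (simp add: okz_def)
  hence "a * TT a 0 \<le> 1" by simp
  from IVT'[of "\<lambda>t. a * TT a t", OF this ge z0 c]
  obtain t where t: "0 \<le> t" "t \<le> z" "a * TT a t = 1" by blast
  have "a * TT a t = a * t * exp (a * TT a t)" using TT_eq[OF a ok, of t] t by simp
  hence "1 = a * t * exp 1" using t by simp
  moreover have "a * t * exp 1 < 1" using ok[of t] t by (simp add: okz_def)
  ultimately show False by simp
qed

lemma TT_pos: "a \<ge> 0 \<Longrightarrow> okz a z \<Longrightarrow> TT a z \<ge> 0"
  using TT_eq[of a z] by (metis exp_gt_zero less_eq_real_def mult_nonneg_nonneg okz_def)

lemma okz0: "0 \<le> a \<Longrightarrow> a < 1 \<Longrightarrow> okz a (exp (- a))"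
  using texp_mono[of a 1] by (simp add: okz_def exp_minus field_simps)

lemma TT_at: 
  assumes a: "0 \<le> a" "a < 1"
  shows "TT a (exp (- a)) = 1"
proof -
  define s where "s = TT a (exp (- a))"
  have ok: "okz a (exp (- a))" by (rule okz0[OF a])
  have se: "s = exp (- a) * exp (a * s)" unfolding s_def by (rule TT_eq[OF a(1) ok])
  have s0: "s \<ge> 0" unfolding s_def by (rule TT_pos[OF a(1) ok])
  have as: "a * s < 1" unfolding s_def by (rule TT_lt[OF a(1) ok])
  show ?thesis
  proof (cases "a = 0")
    case True then show ?thesis using se by (simp add: s_def)
  next
    case False
    hence apos: "a > 0" using a by simp
    have key: "(a * s) * exp (- (a * s)) = a * exp (- a)"
      using se by (simp add: exp_minus field_simps)
    have "a * s = a"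
    proof (rule ccontr)
      assume ne: "a * s \<noteq> a"
      show False
      proof (cases "a * s < a")
        case True
        from texp_mono[of "a * s" a] True s0 apos a key show False by simp
      next
        case False
        with ne have "a < a * s" by linarith
        from texp_mono[of a "a * s"] this as a key show False by simp
      qed
    qed
    then show ?thesis using apos by (simp add: s_def)
  qed
qed


definition Fj :: "real \<Rightarrow> real \<Rightarrow> nat \<Rightarrow> real fps" where
  "Fj a y j = Abs_fps (\<lambda>n. real n ^ j * cf a y n)"

lemma Fj_0: "Fj a y 0 = Efps a y" by (simp add: Fj_def Efps_def)

lemma Fj_Suc: "Fj a y (Suc j) = fps_X * fps_deriv (Fj a y j)"
proof (rule fps_ext)
  fix n show "fps_nth (Fj a y (Suc j)) n = fps_nth (fps_X * fps_deriv (Fj a y j)) n"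
    by (cases n) (simp_all add: Fj_def del: of_nat_Suc)
qed

lemma Fj_radius: "a \<ge> 0 \<Longrightarrow> okz a z \<Longrightarrow> ereal (norm z) < fps_conv_radius (Fj a y j)"
proof (induction j)
  case 0 then show ?case using okz_radius by (simp add: Fj_0)
next
  case (Suc j)
  have "fps_conv_radius (Fj a y j) \<le> fps_conv_radius (fps_deriv (Fj a y j))"
    by (rule fps_conv_radius_deriv)
  also have "\<dots> \<le> fps_conv_radius (fps_X * fps_deriv (Fj a y j))"
    using fps_conv_radius_mult[of fps_X "fps_deriv (Fj a y j)"] by simp
  finally show ?case using Suc by (simp add: Fj_Suc)
qed

definition Sj :: "real \<Rightarrow> real \<Rightarrow> nat \<Rightarrow> real \<Rightarrow> real" where
  "Sj a y j z = eval_fps (Fj a y j) z"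

definition UU :: "real \<Rightarrow> real set" where
  "UU a = {z. 0 < z \<and> a * z * exp 1 < 1}"

lemma UU_open: "open (UU a)"
  unfolding UU_def by (intro open_Collect_conj open_Collect_less continuous_intros)

lemma UU_okz: "z \<in> UU a \<Longrightarrow> okz a z" by (simp add: UU_def okz_def)

lemma Sj_0: "a \<ge> 0 \<Longrightarrow> okz a z \<Longrightarrow> Sj a y 0 z = exp (y * TT a z)"
  unfolding Sj_def Fj_0 using phi_exp[of a z y] by (simp add: phi_def gfun0_TT mult.commute)

lemma Sj_Suc_deriv:
  assumes a: "a \<ge> 0" and z: "okz a z"
  shows "Sj a y (Suc j) z = z * eval_fps (fps_deriv (Fj a y j)) z"
    and "DERIV (Sj a y j) z :> eval_fps (fps_deriv (Fj a y j)) z"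
proof -
  have r: "ereal (norm z) < fps_conv_radius (fps_deriv (Fj a y j))"
    using Fj_radius[OF a z, of y j] fps_conv_radius_deriv[of "Fj a y j"] by (auto intro: less_le_trans)
  show "Sj a y (Suc j) z = z * eval_fps (fps_deriv (Fj a y j)) z"
    unfolding Sj_def Fj_Suc by (subst eval_fps_mult) (use r in auto)
  show "DERIV (Sj a y j) z :> eval_fps (fps_deriv (Fj a y j)) z"
    unfolding Sj_def[abs_def] by (rule has_field_derivative_eval_fps) (rule Fj_radius[OF a z])
qed

definition Td :: "real \<Rightarrow> real \<Rightarrow> real" where
  "Td a z = eval_fps (fps_deriv (Tfps a)) z"

lemma TT_deriv:
  assumes a: "a \<ge> 0" and z: "okz a z"
  shows "DERIV (TT a) z :> Td a z"
proof -
  have r: "ereal (norm z) < fps_conv_radius (Tfps a)" by (rule Tfps_radius[OF a z])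
  show ?thesis unfolding TT_def[abs_def] Td_def by (rule has_field_derivative_eval_fps[OF r])
qed

lemma Td_eq:
  assumes a: "a \<ge> 0" and z: "z \<in> UU a"
  shows "z * Td a z = TT a z / (1 - a * TT a z)"
proof -
  have ok: "okz a z" by (rule UU_okz[OF z])
  define T where "T = TT a z"
  have d1: "DERIV (\<lambda>w. w * exp (a * TT a w)) z :> 1 * exp (a * TT a z) + (exp (a * TT a z) * (a * Td a z)) * z"
    by (intro DERIV_mult DERIV_ident DERIV_fun_exp DERIV_cmult TT_deriv[OF a ok])
  have d2: "DERIV (\<lambda>w. w * exp (a * TT a w)) z :> Td a z"
    by (rule has_field_derivative_transform_within_open[OF TT_deriv[OF a ok] UU_open z])
       (use TT_eq[OF a] UU_okz in auto)
  have e: "Td a z = exp (a * T) + exp (a * T) * a * Td a z * z"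
    using DERIV_unique[OF d2 d1] unfolding T_def by simp
  have te: "T = z * exp (a * T)" unfolding T_def by (rule TT_eq[OF a ok])
  have lt: "a * T < 1" unfolding T_def by (rule TT_lt[OF a ok])
  have "z * Td a z = z * exp (a * T) + a * (z * exp (a * T)) * (z * Td a z)"
    using e by (metis (no_types, lifting) distrib_left mult.assoc mult.commute)
  hence "z * Td a z = T + a * T * (z * Td a z)" using te by simp
  hence h: "z * Td a z * (1 - a * T) = T" by (simp add: algebra_simps)
  have ne: "1 - a * T \<noteq> 0" using lt by simp
  have "z * Td a z = T / (1 - a * T)" using h ne by (simp add: eq_divide_eq)
  then show ?thesis unfolding T_def .
qed

definition Q :: "real \<Rightarrow> real \<Rightarrow> real" where
  "Q a t = 1 / (1 - a * t)"

lemma DERIV_Q: "a * t \<noteq> 1 \<Longrightarrow> DERIV (Q a) t :> a * Q a t ^ 2"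
  unfolding Q_def[abs_def]
  by (auto intro!: derivative_eq_intros simp: power2_eq_square field_simps)

lemma Sj_step:
  assumes a: "0 \<le> a"
    and PS: "\<And>z. z \<in> UU a \<Longrightarrow> Sj a y j z = P (TT a z) * exp (y * TT a z)"
    and dP: "\<And>t. 0 \<le> t \<Longrightarrow> a * t < 1 \<Longrightarrow> (P has_real_derivative P' t) (at t)"
    and z: "z \<in> UU a"
  shows "Sj a y (Suc j) z = (P' (TT a z) + P (TT a z) * y) * (TT a z * Q a (TT a z)) * exp (y * TT a z)"
proof -
  have ok: "okz a z" by (rule UU_okz[OF z])
  define T where "T = TT a z"
  have T0: "0 \<le> T" "a * T < 1" unfolding T_def by (rule TT_pos[OF a ok], rule TT_lt[OF a ok])
  have dR: "DERIV (\<lambda>w. P (TT a w) * exp (y * TT a w)) z :>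
       (P' T * Td a z) * exp (y * T) + (exp (y * T) * (y * Td a z)) * P T"
    unfolding T_def
    by (intro DERIV_mult DERIV_fun_exp DERIV_cmult DERIV_chain2[OF dP] TT_deriv[OF a ok] T0[unfolded T_def])
  have dS: "DERIV (\<lambda>w. P (TT a w) * exp (y * TT a w)) z :> eval_fps (fps_deriv (Fj a y j)) z"
    by (rule has_field_derivative_transform_within_open[OF Sj_Suc_deriv(2)[OF a ok] UU_open z])
       (use PS in auto)
  have "Sj a y (Suc j) z = z * eval_fps (fps_deriv (Fj a y j)) z" by (rule Sj_Suc_deriv(1)[OF a ok])
  also have "eval_fps (fps_deriv (Fj a y j)) z = (P' T * Td a z) * exp (y * T) + (exp (y * T) * (y * Td a z)) * P T"
    by (rule DERIV_unique[OF dS dR])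
  also have "z * ((P' T * Td a z) * exp (y * T) + (exp (y * T) * (y * Td a z)) * P T)
      = (P' T + P T * y) * (z * Td a z) * exp (y * T)" by (simp add: algebra_simps)
  also have "z * Td a z = T * Q a T" unfolding T_def Q_def using Td_eq[OF a z] by simp
  finally show ?thesis unfolding T_def .
qed


definition mn :: "real \<Rightarrow> nat \<Rightarrow> nat \<Rightarrow> real \<Rightarrow> real" where
  "mn a k l t = t ^ k * Q a t ^ l"

lemma mn_deriv:
  assumes "a * t \<noteq> 1"
  shows "DERIV (mn a k l) t :> real k * mn a (k - 1) l t + a * real l * mn a k (Suc l) t"
proof -
  have dq: "DERIV (\<lambda>t. Q a t ^ l) t :> real l * ((a * Q a t ^ 2) * Q a t ^ (l - Suc 0))"
    by (rule DERIV_power[OF DERIV_Q[OF assms]])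
  have e: "real l * ((a * Q a t ^ 2) * Q a t ^ (l - Suc 0)) = a * real l * Q a t ^ Suc l"
    by (cases l) (simp_all add: power2_eq_square)
  have "DERIV (\<lambda>t. t ^ k * Q a t ^ l) t :> (real k * t ^ (k - 1)) * Q a t ^ l + (a * real l * Q a t ^ Suc l) * t ^ k"
    using DERIV_mult[OF DERIV_pow[of k t] dq] unfolding e by simp
  then show ?thesis unfolding mn_def[abs_def] by (simp add: algebra_simps)
qed

lemma chain_step:
  assumes a: "0 \<le> a"
    and PS: "\<And>z. z \<in> UU a \<Longrightarrow> Sj a y j z = P (TT a z) * exp (y * TT a z)"
    and dP: "\<And>t. a * t \<noteq> 1 \<Longrightarrow> (P has_real_derivative P' t) (at t)"
    and id: "\<And>t. (P' t + P t * y) * (t * Q a t) = P2 t"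
  shows "\<And>z. z \<in> UU a \<Longrightarrow> Sj a y (Suc j) z = P2 (TT a z) * exp (y * TT a z)"
proof -
  fix z assume z: "z \<in> UU a"
  have "Sj a y (Suc j) z = (P' (TT a z) + P (TT a z) * y) * (TT a z * Q a (TT a z)) * exp (y * TT a z)"
  proof (rule Sj_step[OF a PS _ z])
    fix t :: real assume "0 \<le> t" "a * t < 1"
    then show "(P has_real_derivative P' t) (at t)" by (intro dP) simp
  qed
  then show "Sj a y (Suc j) z = P2 (TT a z) * exp (y * TT a z)" using id by simp
qed

definition P0 :: "real \<Rightarrow> real \<Rightarrow> real \<Rightarrow> real" where
  "P0 a y t = 1 * mn a 0 0 t"

definition P1 :: "real \<Rightarrow> real \<Rightarrow> real \<Rightarrow> real" where
  "P1 a y t = 1 * y * mn a 1 1 t"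

definition P2 :: "real \<Rightarrow> real \<Rightarrow> real \<Rightarrow> real" where
  "P2 a y t = 1 * y * mn a 1 2 t + 1 * y * a * mn a 2 3 t + 1 * y^2 * mn a 2 2 t"

definition P3 :: "real \<Rightarrow> real \<Rightarrow> real \<Rightarrow> real" where
  "P3 a y t = 1 * y * mn a 1 3 t + 4 * y * a * mn a 2 4 t + 3 * y * a^2 * mn a 3 5 t + 3 * y^2 * mn a 2 3 t + 3 * y^2 * a * mn a 3 4 t + 1 * y^3 * mn a 3 3 t"

definition P4 :: "real \<Rightarrow> real \<Rightarrow> real \<Rightarrow> real" where
  "P4 a y t = 1 * y * mn a 1 4 t + 11 * y * a * mn a 2 5 t + 25 * y * a^2 * mn a 3 6 t + 15 * y * a^3 * mn a 4 7 t + 7 * y^2 * mn a 2 4 t + 22 * y^2 * a * mn a 3 5 t + 15 * y^2 * a^2 * mn a 4 6 t + 6 * y^3 * mn a 3 4 t + 6 * y^3 * a * mn a 4 5 t + 1 * y^4 * mn a 4 4 t"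

lemma S0: "0 \<le> a \<Longrightarrow> z \<in> UU a \<Longrightarrow> Sj a y 0 z = P0 a y (TT a z) * exp (y * TT a z)"
  using Sj_0[of a z y] UU_okz[of z a] by (simp add: P0_def mn_def)

lemma S1: "0 \<le> a \<Longrightarrow> z \<in> UU a \<Longrightarrow> Sj a y 1 z = P1 a y (TT a z) * exp (y * TT a z)"
proof -
  assume a: "0 \<le> a" and z: "z \<in> UU a"
  have dP: "DERIV (P0 a y) t :> 1 * (real 0 * mn a (0 - 1) 0 t + a * real 0 * mn a 0 (Suc 0) t)" if "a * t \<noteq> 1" for t
    unfolding P0_def[abs_def] by (intro DERIV_add DERIV_cmult mn_deriv that)
  have id: "(1 * (real 0 * mn a (0 - 1) 0 t + a * real 0 * mn a 0 (Suc 0) t) + P0 a y t * y) * (t * Q a t) = P1 a y t" for t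
    unfolding P0_def P1_def mn_def by (simp; (algebra)?)
  show ?thesis
    using chain_step[OF a S0[OF a] dP id z] by (simp add: numeral_eq_Suc)
qed

lemma S2: "0 \<le> a \<Longrightarrow> z \<in> UU a \<Longrightarrow> Sj a y 2 z = P2 a y (TT a z) * exp (y * TT a z)"
proof -
  assume a: "0 \<le> a" and z: "z \<in> UU a"
  have dP: "DERIV (P1 a y) t :> 1 * y * (real 1 * mn a (1 - 1) 1 t + a * real 1 * mn a 1 (Suc 1) t)" if "a * t \<noteq> 1" for t
    unfolding P1_def[abs_def] by (intro DERIV_add DERIV_cmult mn_deriv that)
  have id: "(1 * y * (real 1 * mn a (1 - 1) 1 t + a * real 1 * mn a 1 (Suc 1) t) + P1 a y t * y) * (t * Q a t) = P2 a y t" for t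
    unfolding P1_def P2_def mn_def by (simp; (algebra)?)
  show ?thesis
    using chain_step[OF a S1[OF a] dP id z] by (simp add: numeral_eq_Suc)
qed

lemma S3: "0 \<le> a \<Longrightarrow> z \<in> UU a \<Longrightarrow> Sj a y 3 z = P3 a y (TT a z) * exp (y * TT a z)"
proof -
  assume a: "0 \<le> a" and z: "z \<in> UU a"
  have dP: "DERIV (P2 a y) t :> 1 * y * (real 1 * mn a (1 - 1) 2 t + a * real 2 * mn a 1 (Suc 2) t) + 1 * y * a * (real 2 * mn a (2 - 1) 3 t + a * real 3 * mn a 2 (Suc 3) t) + 1 * y^2 * (real 2 * mn a (2 - 1) 2 t + a * real 2 * mn a 2 (Suc 2) t)" if "a * t \<noteq> 1" for t
    unfolding P2_def[abs_def] by (intro DERIV_add DERIV_cmult mn_deriv that)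
  have id: "(1 * y * (real 1 * mn a (1 - 1) 2 t + a * real 2 * mn a 1 (Suc 2) t) + 1 * y * a * (real 2 * mn a (2 - 1) 3 t + a * real 3 * mn a 2 (Suc 3) t) + 1 * y^2 * (real 2 * mn a (2 - 1) 2 t + a * real 2 * mn a 2 (Suc 2) t) + P2 a y t * y) * (t * Q a t) = P3 a y t" for t
    unfolding P2_def P3_def mn_def by (simp; (algebra)?)
  show ?thesis
    using chain_step[OF a S2[OF a] dP id z] by (simp add: numeral_eq_Suc)
qed

lemma S4: "0 \<le> a \<Longrightarrow> z \<in> UU a \<Longrightarrow> Sj a y 4 z = P4 a y (TT a z) * exp (y * TT a z)"
proof -
  assume a: "0 \<le> a" and z: "z \<in> UU a"
  have dP: "DERIV (P3 a y) t :> 1 * y * (real 1 * mn a (1 - 1) 3 t + a * real 3 * mn a 1 (Suc 3) t) + 4 * y * a * (real 2 * mn a (2 - 1) 4 t + a * real 4 * mn a 2 (Suc 4) t) + 3 * y * a^2 * (real 3 * mn a (3 - 1) 5 t + a * real 5 * mn a 3 (Suc 5) t) + 3 * y^2 * (real 2 * mn a (2 - 1) 3 t + a * real 3 * mn a 2 (Suc 3) t) + 3 * y^2 * a * (real 3 * mn a (3 - 1) 4 t + a * real 4 * mn a 3 (Suc 4) t) + 1 * y^3 * (real 3 * mn a (3 - 1) 3 t + a * real 3 * mn a 3 (Suc 3) t)" if "a * t \<noteq> 1" for t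
    unfolding P3_def[abs_def] by (intro DERIV_add DERIV_cmult mn_deriv that)
  have id: "(1 * y * (real 1 * mn a (1 - 1) 3 t + a * real 3 * mn a 1 (Suc 3) t) + 4 * y * a * (real 2 * mn a (2 - 1) 4 t + a * real 4 * mn a 2 (Suc 4) t) + 3 * y * a^2 * (real 3 * mn a (3 - 1) 5 t + a * real 5 * mn a 3 (Suc 5) t) + 3 * y^2 * (real 2 * mn a (2 - 1) 3 t + a * real 3 * mn a 2 (Suc 3) t) + 3 * y^2 * a * (real 3 * mn a (3 - 1) 4 t + a * real 4 * mn a 3 (Suc 4) t) + 1 * y^3 * (real 3 * mn a (3 - 1) 3 t + a * real 3 * mn a 3 (Suc 3) t) + P3 a y t * y) * (t * Q a t) = P4 a y t" for t
    unfolding P3_def P4_def mn_def by (simp; (algebra)?)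
  show ?thesis
    using chain_step[OF a S3[OF a] dP id z] by (simp add: numeral_eq_Suc)
qed


lemma z0_UU: "0 \<le> a \<Longrightarrow> a < 1 \<Longrightarrow> exp (- a) \<in> UU a"
  using okz0[of a] by (simp add: UU_def okz_def)

lemma omega_cf: "omega_beta a (Suc k) y = exp (- y) * (cf a y (Suc k) * exp (- a) ^ Suc k)"
proof -
  have "exp (- (y + real (Suc k) * a)) = exp (- y) * exp (- a) ^ Suc k"
    by (simp add: exp_add[symmetric] exp_of_nat_mult[symmetric] algebra_simps)
  then show ?thesis by (simp add: omega_beta_def cf_def AA_def)
qed

lemma mom_gen:
  assumes a: "0 \<le> a" "a < 1" and S: "Sj a y j (exp (- a)) = V * exp y"
  shows "(\<lambda>k. omega_beta a (Suc k) y * real (Suc k) ^ j) sums (V - (if j = 0 then exp (- y) else 0))"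
proof -
  have ok: "okz a (exp (- a))" by (rule okz0[OF a])
  have s: "(\<lambda>n. fps_nth (Fj a y j) n * exp (- a) ^ n) sums Sj a y j (exp (- a))"
    unfolding Sj_def by (rule sums_eval_fps) (rule Fj_radius[OF a(1) ok])
  hence "(\<lambda>n. exp (- y) * (real n ^ j * cf a y n * exp (- a) ^ n)) sums (exp (- y) * (V * exp y))"
    unfolding S by (intro sums_mult) (simp add: Fj_def)
  hence s2: "(\<lambda>n. exp (- y) * (real n ^ j * cf a y n * exp (- a) ^ n)) sums V"
    by (simp add: exp_minus field_simps)
  have s3: "(\<lambda>k. exp (- y) * (real (Suc k) ^ j * cf a y (Suc k) * exp (- a) ^ Suc k)) sums
      (V - exp (- y) * (real 0 ^ j * cf a y 0 * exp (- a) ^ 0))"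
    using s2 by (subst sums_Suc_iff) simp
  have e1: "(\<lambda>k. exp (- y) * (real (Suc k) ^ j * cf a y (Suc k) * exp (- a) ^ Suc k))
      = (\<lambda>k. omega_beta a (Suc k) y * real (Suc k) ^ j)"
    unfolding omega_cf by (rule ext) (simp only: ac_simps)
  have e2: "exp (- y) * (real 0 ^ j * cf a y 0 * exp (- a) ^ 0) = (if j = 0 then exp (- y) else 0)"
    by (simp add: cf_def)
  show ?thesis using s3 unfolding e1 e2 .
qed

lemma Sj_at:
  assumes a: "0 \<le> a" "a < 1"
  shows "Sj a y 0 (exp (- a)) = P0 a y 1 * exp y"
    "Sj a y 1 (exp (- a)) = P1 a y 1 * exp y"
    "Sj a y 2 (exp (- a)) = P2 a y 1 * exp y"
    "Sj a y 3 (exp (- a)) = P3 a y 1 * exp y"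
    "Sj a y 4 (exp (- a)) = P4 a y 1 * exp y"
  using S0[OF a(1) z0_UU[OF a]] S1[OF a(1) z0_UU[OF a]] S2[OF a(1) z0_UU[OF a]]
    S3[OF a(1) z0_UU[OF a]] S4[OF a(1) z0_UU[OF a]] TT_at[OF a] by simp_all

lemma mn1: "mn a k l 1 = (1 / (1 - a)) ^ l" by (simp add: mn_def Q_def)

lemma moments:
  assumes a: "0 \<le> a" "a < 1"
  defines "q \<equiv> 1 / (1 - a)"
  shows "(\<lambda>k. omega_beta a (Suc k) y * real (Suc k) ^ 0) sums (1 - exp (- y))"
    "(\<lambda>k. omega_beta a (Suc k) y * real (Suc k) ^ 1) sums (y * q)"
    "(\<lambda>k. omega_beta a (Suc k) y * real (Suc k) ^ 2) sums (y * q^2 + y * a * q^3 + y^2 * q^2)"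
    "(\<lambda>k. omega_beta a (Suc k) y * real (Suc k) ^ 3) sums
       (y * q^3 + 4 * y * a * q^4 + 3 * y * a^2 * q^5 + 3 * y^2 * q^3 + 3 * y^2 * a * q^4 + y^3 * q^3)"
    "(\<lambda>k. omega_beta a (Suc k) y * real (Suc k) ^ 4) sums
       (y * q^4 + 11 * y * a * q^5 + 25 * y * a^2 * q^6 + 15 * y * a^3 * q^7 + 7 * y^2 * q^4
        + 22 * y^2 * a * q^5 + 15 * y^2 * a^2 * q^6 + 6 * y^3 * q^4 + 6 * y^3 * a * q^5 + y^4 * q^4)"
  using mom_gen[OF a Sj_at(1)[OF a]] mom_gen[OF a Sj_at(2)[OF a]] mom_gen[OF a Sj_at(3)[OF a]]
    mom_gen[OF a Sj_at(4)[OF a]] mom_gen[OF a Sj_at(5)[OF a]]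
  by (simp_all add: P0_def P1_def P2_def P3_def P4_def mn1 q_def)


definition Ival :: "nat \<Rightarrow> real \<Rightarrow> nat \<Rightarrow> nat \<Rightarrow> real" where
  "Ival n c m v = Gamma (real v + real m + 1) * Gamma (real n / c - real m - 1)
      / (c^m * Gamma (real v + 1) * Gamma (real n / c))"

lemma Gpos_ratio: "(x::real) > 0 \<Longrightarrow> Gamma (x + real m) = pochhammer x m * Gamma x"
proof -
  assume x: "x > 0"
  have "x \<notin> \<int>\<^sub>\<le>\<^sub>0" using x by (auto dest: nonpos_Ints_nonpos)
  from pochhammer_Gamma[OF this, of m] show ?thesis using Gamma_real_pos[OF x] by simp
qed

lemma rho_poch:
  assumes c: "c > 0" and n: "real n > (real m + 1) * c"
  shows "(real n - c) / c * Ival n c m v =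
    (real n - c) / c * pochhammer (real v + 1) m / (c^m * pochhammer (real n / c - real m - 1) (Suc m))"
proof -
  define N where "N = real n / c"
  have N: "N - real m - 1 > 0" using n c unfolding N_def by (simp add: field_simps)
  have g1: "Gamma (real v + real m + 1) = pochhammer (real v + 1) m * Gamma (real v + 1)"
    using Gpos_ratio[of "real v + 1" m] by (simp add: add_ac)
  have g2: "Gamma N = pochhammer (N - real m - 1) (Suc m) * Gamma (N - real m - 1)"
    using Gpos_ratio[OF N, of "Suc m"] by simp
  have g1p: "Gamma (real v + 1) > 0" by (rule Gamma_real_pos) simp
  have g2p: "Gamma (N - real m - 1) > 0" by (rule Gamma_real_pos) (use N in simp)
  have p: "Gamma (real v + 1) \<noteq> 0" "Gamma (N - real m - 1) \<noteq> 0" using g1p g2p by linarith+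
  have p3: "pochhammer (N - real m - 1) (Suc m) \<noteq> 0" using pochhammer_pos[OF N, of "Suc m"] by linarith
  have cm: "c^m \<noteq> 0" using c by simp
  have "Gamma (real v + real m + 1) * Gamma (N - real m - 1) / (c^m * Gamma (real v + 1) * Gamma N)
      = pochhammer (real v + 1) m / (c^m * pochhammer (N - real m - 1) (Suc m))"
    unfolding g1 g2 using p p3 cm by (simp add: divide_simps)
  then show ?thesis unfolding Ival_def N_def[symmetric] by simp
qed

lemma rho_alg:
  assumes c: "c > 0" and n: "real n > (real m + 1) * c"
  shows "(real n - c) / c * Ival n c m v =
    pochhammer (real v + 1) m / (\<Prod>i=2..m+1. (real n - real i * c))"
proof -
  define x where "x = real n / c"
  have nx: "real n = c * x" unfolding x_def using c by simp
  have x: "x > real m + 1" using n c unfolding x_def by (simp add: field_simps)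
  have P: "c * pochhammer (x - real m - 1) (Suc m) * c ^ m = (\<Prod>i=1..m+1. (real n - real i * c))"
  proof -
    have "pochhammer (x - real m - 1) (Suc m) = (\<Prod>i=1..Suc m. x - real m - 1 + real (Suc m - i))"
      by (rule pochhammer_prod_rev)
    also have "\<dots> = (\<Prod>i=1..m+1. x - real i)"
      by (rule prod.cong) (auto simp: of_nat_diff)
    finally have "c ^ Suc m * pochhammer (x - real m - 1) (Suc m) = c ^ Suc m * (\<Prod>i=1..m+1. x - real i)" by simp
    also have "\<dots> = (\<Prod>i=1..m+1. c * (x - real i))" by (simp add: prod.distrib)
    also have "\<dots> = (\<Prod>i=1..m+1. (real n - real i * c))" unfolding nx by (simp add: algebra_simps)
    finally show ?thesis by (simp add: algebra_simps)
  qed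
  have P1: "(\<Prod>i=1..m+1. (real n - real i * c)) = (real n - c) * (\<Prod>i=2..m+1. (real n - real i * c))"
    by (simp add: prod.atLeast_Suc_atMost numeral_2_eq_2)
  have pos: "pochhammer (x - real m - 1) (Suc m) > 0" by (rule pochhammer_pos) (use x in simp)
  have cm0: "c * real m \<ge> 0" using c by simp
  have nc: "real n - c \<noteq> 0" using n cm0 by (simp add: algebra_simps; linarith)
  have cm: "c ^ m \<noteq> 0" using c by simp
  have "(real n - c) / c * Ival n c m v = (real n - c) * pochhammer (real v + 1) m / (c * pochhammer (x - real m - 1) (Suc m) * c ^ m)"
    unfolding rho_poch[OF c n] x_def by (simp add: field_simps)
  also have "\<dots> = pochhammer (real v + 1) m / (\<Prod>i=2..m+1. (real n - real i * c))"
    unfolding P P1 using nc by simp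
  finally show ?thesis .
qed

lemma prod_2: "(\<Prod>i=2..m+1. f i) = (if m = 0 then 1 else f (m+1) * (\<Prod>i=2..m. f i))" for f :: "nat \<Rightarrow> real"
  by (cases m) (simp_all add: prod.atLeast_Suc_atMost_Suc_shift prod.nat_ivl_Suc')

lemma rho_vals:
  assumes c: "c > 0"
  shows "real n > c \<Longrightarrow> (real n - c) / c * Ival n c 0 v = 1"
    "real n > 2 * c \<Longrightarrow> (real n - c) / c * Ival n c 1 v = (real v + 1) / (real n - 2 * c)"
    "real n > 3 * c \<Longrightarrow> (real n - c) / c * Ival n c 2 v
        = (real v + 1) * (real v + 2) / ((real n - 2 * c) * (real n - 3 * c))"
    "real n > 4 * c \<Longrightarrow> (real n - c) / c * Ival n c 3 v
        = (real v + 1) * (real v + 2) * (real v + 3) / ((real n - 2 * c) * (real n - 3 * c) * (real n - 4 * c))"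
    "real n > 5 * c \<Longrightarrow> (real n - c) / c * Ival n c 4 v
        = (real v + 1) * (real v + 2) * (real v + 3) * (real v + 4)
          / ((real n - 2 * c) * (real n - 3 * c) * (real n - 4 * c) * (real n - 5 * c))"
  using rho_alg[OF c, where n=n and v=v and m=0] rho_alg[OF c, where n=n and v=v and m=1]
    rho_alg[OF c, where n=n and v=v and m=2] rho_alg[OF c, where n=n and v=v and m=3]
    rho_alg[OF c, where n=n and v=v and m=4]
  by (simp_all add: numeral_eq_Suc pochhammer_Suc prod.nat_ivl_Suc' algebra_simps)

lemma sum_pow0: "(\<Sum>m\<le>d. b m * (0::real) ^ m) = b 0"
  by (induction d) auto

lemma D_op_poly:
  fixes b :: "nat \<Rightarrow> real"
  assumes c: "c > 0" and n: "real n > (real d + 1) * c"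
    and u: "u = real n * r_n n c \<beta> x"
    and R: "\<And>m. m \<le> d \<Longrightarrow> (\<lambda>v. omega_beta \<beta> (Suc v) u * ((real n - c) / c * Ival n c m v)) sums R m"
  shows "D_op n c \<beta> (\<lambda>t. \<Sum>m\<le>d. b m * t ^ m) x = (\<Sum>m\<le>d. b m * R m) + exp (- u) * b 0"
proof -
  have nc: "real n - c > 0"
  proof -
    have "real d * c \<ge> 0" using c by simp
    then show ?thesis using n by (simp add: algebra_simps)
  qed
  have int: "integral {0..} (\<lambda>t. jb_p n v c t * (\<Sum>m\<le>d. b m * t ^ m)) = (\<Sum>m\<le>d. b m * Ival n c m v)" for v
  proof -
    have "((\<lambda>t. \<Sum>m\<le>d. b m * (jb_p n v c t * t ^ m)) has_integral (\<Sum>m\<le>d. b m * Ival n c m v)) {0..}"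
    proof (rule has_integral_sum[OF finite_atMost], rule has_integral_mult_right)
      fix m assume "m \<in> {..d}"
      hence "real m \<le> real d" by simp
      hence "(real m + 1) * c \<le> (real d + 1) * c" using c by (intro mult_right_mono) auto
      hence nm: "real n > (real m + 1) * c" using n by linarith
      show "((\<lambda>t. jb_p n v c t * t ^ m) has_integral Ival n c m v) {0..}"
        unfolding Ival_def by (rule jb_moment[OF c nm])
    qed
    moreover have "(\<lambda>t. \<Sum>m\<le>d. b m * (jb_p n v c t * t ^ m)) = (\<lambda>t. jb_p n v c t * (\<Sum>m\<le>d. b m * t ^ m))"
      by (rule ext) (simp add: sum_distrib_left algebra_simps)
    ultimately show ?thesis by (simp add: integral_unique)
  qed
  have S: "(\<lambda>v. \<Sum>m\<le>d. b m * (omega_beta \<beta> (Suc v) u * ((real n - c) / c * Ival n c m v))) sums (\<Sum>m\<le>d. b m * R m)"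
    by (intro sums_sum sums_mult R) auto
  have S2: "(\<lambda>v. omega_beta \<beta> (Suc v) u * integral {0..} (\<lambda>t. jb_p n v c t * (\<Sum>m\<le>d. b m * t ^ m)))
      sums (c / (real n - c) * (\<Sum>m\<le>d. b m * R m))"
  proof -
    have "(\<lambda>v. c / (real n - c) * (\<Sum>m\<le>d. b m * (omega_beta \<beta> (Suc v) u * ((real n - c) / c * Ival n c m v))))
        sums (c / (real n - c) * (\<Sum>m\<le>d. b m * R m))" by (rule sums_mult[OF S])
    moreover have "(\<lambda>v. c / (real n - c) * (\<Sum>m\<le>d. b m * (omega_beta \<beta> (Suc v) u * ((real n - c) / c * Ival n c m v))))
        = (\<lambda>v. omega_beta \<beta> (Suc v) u * integral {0..} (\<lambda>t. jb_p n v c t * (\<Sum>m\<le>d. b m * t ^ m)))"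
    proof (rule ext)
      fix v
      have "c / (real n - c) * (\<Sum>m\<le>d. b m * (omega_beta \<beta> (Suc v) u * ((real n - c) / c * Ival n c m v)))
          = (\<Sum>m\<le>d. c / (real n - c) * (b m * (omega_beta \<beta> (Suc v) u * ((real n - c) / c * Ival n c m v))))"
        by (rule sum_distrib_left)
      also have "\<dots> = (\<Sum>m\<le>d. omega_beta \<beta> (Suc v) u * (b m * Ival n c m v))"
        using nc c by (intro sum.cong refl) (simp add: field_simps)
      also have "\<dots> = omega_beta \<beta> (Suc v) u * (\<Sum>m\<le>d. b m * Ival n c m v)"
        by (rule sum_distrib_left[symmetric])
      finally show "c / (real n - c) * (\<Sum>m\<le>d. b m * (omega_beta \<beta> (Suc v) u * ((real n - c) / c * Ival n c m v)))
          = omega_beta \<beta> (Suc v) u * integral {0..} (\<lambda>t. jb_p n v c t * (\<Sum>m\<le>d. b m * t ^ m))"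
        unfolding int .
    qed
    ultimately show ?thesis by simp
  qed
  have "D_op n c \<beta> (\<lambda>t. \<Sum>m\<le>d. b m * t ^ m) x
      = (real n - c) / c * (c / (real n - c) * (\<Sum>m\<le>d. b m * R m)) + exp (- u) * b 0"
    unfolding D_op_def u[symmetric] sums_unique[OF S2, symmetric] sum_pow0 ..
  also have "\<dots> = (\<Sum>m\<le>d. b m * R m) + exp (- u) * b 0" using nc c by simp
  finally show ?thesis .
qed


context
  fixes \<beta> u c :: real and n :: nat
  assumes b0: "0 \<le> \<beta>" and b1: "\<beta> < 1" and c: "c > 0"
begin

abbreviation "qq \<equiv> 1 / (1 - \<beta>)"
abbreviation "om v \<equiv> omega_beta \<beta> (Suc v) u"
abbreviation "M1 \<equiv> u * qq"
abbreviation "M2 \<equiv> u * qq^2 + u * \<beta> * qq^3 + u^2 * qq^2"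
abbreviation "M3 \<equiv> u * qq^3 + 4 * u * \<beta> * qq^4 + 3 * u * \<beta>^2 * qq^5 + 3 * u^2 * qq^3 + 3 * u^2 * \<beta> * qq^4 + u^3 * qq^3"
abbreviation "M4 \<equiv> u * qq^4 + 11 * u * \<beta> * qq^5 + 25 * u * \<beta>^2 * qq^6 + 15 * u * \<beta>^3 * qq^7 + 7 * u^2 * qq^4
        + 22 * u^2 * \<beta> * qq^5 + 15 * u^2 * \<beta>^2 * qq^6 + 6 * u^3 * qq^4 + 6 * u^3 * \<beta> * qq^5 + u^4 * qq^4"

lemmas mom = moments[OF b0 b1, of u]

lemma R0: "real n > c \<Longrightarrow> (\<lambda>v. om v * ((real n - c) / c * Ival n c 0 v)) sums (1 - exp (- u))"
  using mom(1) rho_vals(1)[OF c] by simp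

lemma R1: "real n > 2 * c \<Longrightarrow> (\<lambda>v. om v * ((real n - c) / c * Ival n c 1 v)) sums (M1 / (real n - 2 * c))"
proof -
  assume n: "real n > 2 * c"
  have "(\<lambda>v. om v * real (Suc v) ^ 1 / (real n - 2 * c)) sums (M1 / (real n - 2 * c))"
    by (intro sums_divide mom(2))
  moreover have "(\<lambda>v. om v * real (Suc v) ^ 1 / (real n - 2 * c)) = (\<lambda>v. om v * ((real n - c) / c * Ival n c 1 v))"
    using rho_vals(2)[OF c n] by (intro ext) (simp add: add_ac)
  ultimately show ?thesis by simp
qed

lemma R2: "real n > 3 * c \<Longrightarrow> (\<lambda>v. om v * ((real n - c) / c * Ival n c 2 v)) sums
   ((M2 + M1) / ((real n - 2 * c) * (real n - 3 * c)))"
proof -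
  assume n: "real n > 3 * c"
  have "(\<lambda>v. (om v * real (Suc v) ^ 2 + om v * real (Suc v) ^ 1) / ((real n - 2 * c) * (real n - 3 * c)))
     sums ((M2 + M1) / ((real n - 2 * c) * (real n - 3 * c)))"
    by (intro sums_divide sums_add mom(2) mom(3))
  moreover have "(\<lambda>v. (om v * real (Suc v) ^ 2 + om v * real (Suc v) ^ 1) / ((real n - 2 * c) * (real n - 3 * c)))
      = (\<lambda>v. om v * ((real n - c) / c * Ival n c 2 v))"
    using rho_vals(3)[OF c n] by (intro ext) (simp add: algebra_simps power2_eq_square)
  ultimately show ?thesis by simp
qed

lemma R3: "real n > 4 * c \<Longrightarrow> (\<lambda>v. om v * ((real n - c) / c * Ival n c 3 v)) sums
   ((M3 + 3 * M2 + 2 * M1) / ((real n - 2 * c) * (real n - 3 * c) * (real n - 4 * c)))"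
proof -
  assume n: "real n > 4 * c"
  have "(\<lambda>v. (om v * real (Suc v) ^ 3 + 3 * (om v * real (Suc v) ^ 2) + 2 * (om v * real (Suc v) ^ 1))
       / ((real n - 2 * c) * (real n - 3 * c) * (real n - 4 * c)))
     sums ((M3 + 3 * M2 + 2 * M1) / ((real n - 2 * c) * (real n - 3 * c) * (real n - 4 * c)))"
    by (intro sums_divide sums_add sums_mult mom(2) mom(3) mom(4))
  moreover have "(\<lambda>v. (om v * real (Suc v) ^ 3 + 3 * (om v * real (Suc v) ^ 2) + 2 * (om v * real (Suc v) ^ 1))
       / ((real n - 2 * c) * (real n - 3 * c) * (real n - 4 * c)))
      = (\<lambda>v. om v * ((real n - c) / c * Ival n c 3 v))"
  proof (rule ext)
    fix v
    have num: "om v * real (Suc v) ^ 3 + 3 * (om v * real (Suc v) ^ 2) + 2 * (om v * real (Suc v) ^ 1)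
        = om v * ((real v + 1) * (real v + 2) * (real v + 3))"
      by (simp only: of_nat_Suc) algebra
    show "(om v * real (Suc v) ^ 3 + 3 * (om v * real (Suc v) ^ 2) + 2 * (om v * real (Suc v) ^ 1))
       / ((real n - 2 * c) * (real n - 3 * c) * (real n - 4 * c)) = om v * ((real n - c) / c * Ival n c 3 v)"
      unfolding rho_vals(4)[OF c n] num by (rule times_divide_eq_right[symmetric])
  qed
  ultimately show ?thesis by simp
qed

lemma R4: "real n > 5 * c \<Longrightarrow> (\<lambda>v. om v * ((real n - c) / c * Ival n c 4 v)) sums
   ((M4 + 6 * M3 + 11 * M2 + 6 * M1) / ((real n - 2 * c) * (real n - 3 * c) * (real n - 4 * c) * (real n - 5 * c)))"
proof -
  assume n: "real n > 5 * c"
  have "(\<lambda>v. (om v * real (Suc v) ^ 4 + 6 * (om v * real (Suc v) ^ 3) + 11 * (om v * real (Suc v) ^ 2) + 6 * (om v * real (Suc v) ^ 1))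
       / ((real n - 2 * c) * (real n - 3 * c) * (real n - 4 * c) * (real n - 5 * c)))
     sums ((M4 + 6 * M3 + 11 * M2 + 6 * M1) / ((real n - 2 * c) * (real n - 3 * c) * (real n - 4 * c) * (real n - 5 * c)))"
    by (intro sums_divide sums_add sums_mult mom(2) mom(3) mom(4) mom(5))
  moreover have "(\<lambda>v. (om v * real (Suc v) ^ 4 + 6 * (om v * real (Suc v) ^ 3) + 11 * (om v * real (Suc v) ^ 2) + 6 * (om v * real (Suc v) ^ 1))
       / ((real n - 2 * c) * (real n - 3 * c) * (real n - 4 * c) * (real n - 5 * c)))
      = (\<lambda>v. om v * ((real n - c) / c * Ival n c 4 v))"
  proof (rule ext)
    fix v
    have num: "om v * real (Suc v) ^ 4 + 6 * (om v * real (Suc v) ^ 3) + 11 * (om v * real (Suc v) ^ 2) + 6 * (om v * real (Suc v) ^ 1)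
        = om v * ((real v + 1) * (real v + 2) * (real v + 3) * (real v + 4))"
      by (simp only: of_nat_Suc) algebra
    show "(om v * real (Suc v) ^ 4 + 6 * (om v * real (Suc v) ^ 3) + 11 * (om v * real (Suc v) ^ 2) + 6 * (om v * real (Suc v) ^ 1))
       / ((real n - 2 * c) * (real n - 3 * c) * (real n - 4 * c) * (real n - 5 * c)) = om v * ((real n - c) / c * Ival n c 4 v)"
      unfolding rho_vals(5)[OF c n] num by (rule times_divide_eq_right[symmetric])
  qed
  ultimately show ?thesis by simp
qed

end


lemma u_eq: "real n > 0 \<Longrightarrow> real n * r_n n c \<beta> x = (real n - 2 * c) * (1 - \<beta>) * x"
  by (simp add: r_n_def)

lemma part1:
  fixes c \<beta> x :: real
  assumes c: "c > 0" and b0: "0 \<le> \<beta>" and b1: "\<beta> < 1" and n: "real n > 2 * c"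
  shows "D_op n c \<beta> (\<lambda>t. t - x) x = 0"
proof -
  define u where "u = real n * r_n n c \<beta> x"
  define b where "b m = (if m = 0 then - x else 1)" for m :: nat
  have f: "(\<lambda>t. t - x) = (\<lambda>t. \<Sum>m\<le>1. b m * t ^ m)" by (rule ext) (simp add: b_def)
  have n1: "real n > (real 1 + 1) * c" using n by simp
  have R: "(\<lambda>v. omega_beta \<beta> (Suc v) u * ((real n - c) / c * Ival n c m v)) sums
      ([1 - exp (- u), u * (1 / (1 - \<beta>)) / (real n - 2 * c)] ! m)" if "m \<le> 1" for m
  proof -
    have "m = 0 \<or> m = 1" using that by auto
    then show ?thesis
      using R0[OF b0 b1 c, of n u] R1[OF b0 b1 c, of n u] n c by auto
  qed
  have "D_op n c \<beta> (\<lambda>t. t - x) x = (\<Sum>m\<le>1. b m * [1 - exp (- u), u * (1 / (1 - \<beta>)) / (real n - 2 * c)] ! m) + exp (- u) * b 0"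
    unfolding f by (rule D_op_poly[OF c n1 u_def R])
  also have "\<dots> = u / ((1 - \<beta>) * (real n - 2 * c)) - x"
    by (simp add: b_def algebra_simps)
  also have "u = (real n - 2 * c) * (1 - \<beta>) * x" unfolding u_def using n c by (intro u_eq) simp
  also have "(real n - 2 * c) * (1 - \<beta>) * x / ((1 - \<beta>) * (real n - 2 * c)) - x = 0"
  proof -
    have "(1 - \<beta>) * (real n - 2 * c) \<noteq> 0" using n b1 c by simp
    then show ?thesis by (simp add: field_simps)
  qed
  finally show ?thesis .
qed

lemma part2:
  fixes c \<beta> x :: real
  assumes c: "c > 0" and b0: "0 \<le> \<beta>" and b1: "\<beta> < 1" and n: "real n > 3 * c"
  shows "D_op n c \<beta> (\<lambda>t. (t - x) ^ 2) x
    = c / (real n - 3 * c) * x ^ 2 + (2 - 2 * \<beta> + \<beta> ^ 2) / ((real n - 3 * c) * (1 - \<beta>) ^ 2) * x"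
proof -
  define u where "u = real n * r_n n c \<beta> x"
  define q where "q = 1 / (1 - \<beta>)"
  define b where "b m = (if m = 0 then x^2 else if m = 1 then -2 * x else 1)" for m :: nat
  have f: "(\<lambda>t. (t - x) ^ 2) = (\<lambda>t. \<Sum>m\<le>2. b m * t ^ m)"
    by (rule ext) (simp add: b_def numeral_2_eq_2 power2_eq_square algebra_simps)
  have n1: "real n > (real 2 + 1) * c" using n by simp
  define L where "L = [1 - exp (- u), u * q / (real n - 2 * c),
     ((u * q^2 + u * \<beta> * q^3 + u^2 * q^2) + u * q) / ((real n - 2 * c) * (real n - 3 * c))]"
  have R: "(\<lambda>v. omega_beta \<beta> (Suc v) u * ((real n - c) / c * Ival n c m v)) sums (L ! m)" if "m \<le> 2" for m
  proof -
    have "m = 0 \<or> m = 1 \<or> m = 2" using that by auto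
    then show ?thesis unfolding L_def q_def
      using R0[OF b0 b1 c, of n u] R1[OF b0 b1 c, of n u] R2[OF b0 b1 c, of n u] n c by auto
  qed
  have "D_op n c \<beta> (\<lambda>t. (t - x) ^ 2) x = (\<Sum>m\<le>2. b m * L ! m) + exp (- u) * b 0"
    unfolding f by (rule D_op_poly[OF c n1 u_def R])
  also have "\<dots> = x^2 - 2 * x * (u * q / (real n - 2 * c))
      + ((u * q^2 + u * \<beta> * q^3 + u^2 * q^2) + u * q) / ((real n - 2 * c) * (real n - 3 * c))"
    by (simp add: b_def L_def numeral_2_eq_2 algebra_simps)
  also have "u = (real n - 2 * c) * (1 - \<beta>) * x" unfolding u_def using n c by (intro u_eq) simp
  also have "x^2 - 2 * x * ((real n - 2 * c) * (1 - \<beta>) * x * q / (real n - 2 * c))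
      + (((real n - 2 * c) * (1 - \<beta>) * x * q^2 + (real n - 2 * c) * (1 - \<beta>) * x * \<beta> * q^3
          + ((real n - 2 * c) * (1 - \<beta>) * x)^2 * q^2) + (real n - 2 * c) * (1 - \<beta>) * x * q)
        / ((real n - 2 * c) * (real n - 3 * c))
      = c / (real n - 3 * c) * x ^ 2 + (2 - 2 * \<beta> + \<beta> ^ 2) / ((real n - 3 * c) * (1 - \<beta>) ^ 2) * x"
  proof -
    have nz: "real n - 2 * c \<noteq> 0" "real n - 3 * c \<noteq> 0" "1 - \<beta> \<noteq> 0" using n b1 c by auto
    have gen: "x^2 - 2 * x * (A * p * x * (1/p) / A)
      + ((A * p * x * (1/p)^2 + A * p * x * (1 - p) * (1/p)^3 + (A * p * x)^2 * (1/p)^2) + A * p * x * (1/p)) / (A * B)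
      = (A - B) / B * x^2 + (2 - 2 * (1 - p) + (1 - p)^2) / (B * p^2) * x"
      if "A \<noteq> 0" "B \<noteq> 0" "p \<noteq> 0" for A B p :: real
      using that by (simp add: field_simps power2_eq_square power3_eq_cube)
    have "(real n - 2 * c) - (real n - 3 * c) = c" by simp
    with gen[OF nz(1) nz(2) nz(3)] show ?thesis unfolding q_def by simp
  qed
  finally show ?thesis .
qed


lemma alg4_raw:
  fixes A B C E c x s :: real
  assumes nz: "A \<noteq> 0" "B \<noteq> 0" "C \<noteq> 0" "E \<noteq> 0"
    and h: "B = A - c" "C = A - 2 * c" "E = A - 3 * c"
  shows "x^4 - 4 * x^3 * ((A * x) / A) + 6 * x^2 * (((A * x * s^2 + A^2 * x^2) + A * x) / (A * B))
      - 4 * x * (((A * x * (3 * s^4 - 2 * s^3) + 3 * A^2 * x^2 * s^2 + A^3 * x^3) + 3 * (A * x * s^2 + A^2 * x^2) + 2 * (A * x)) / (A * B * C))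
      + ((A * x * (15 * s^6 - 20 * s^5 + 6 * s^4) + A^2 * x^2 * (15 * s^4 - 8 * s^3) + 6 * A^3 * x^3 * s^2 + A^4 * x^4)
         + 6 * (A * x * (3 * s^4 - 2 * s^3) + 3 * A^2 * x^2 * s^2 + A^3 * x^3)
         + 11 * (A * x * s^2 + A^2 * x^2) + 6 * (A * x)) / (A * B * C * E)
    = ((3 * x^2 * (1 + s^2)^2 + 6 * c * x^3 * (1 + s^2) + 3 * c^2 * x^4) * A
       + (x * (6 + 11 * s^2 - 12 * s^3 + 24 * s^4 - 20 * s^5 + 15 * s^6)
      + c * x^2 * (24 + 36 * s^2 - 24 * s^3 + 36 * s^4) + 36 * c^2 * x^3 * (1 + s^2) + 18 * c^3 * x^4)) / (B * C * E)"
  using nz apply (simp add: field_simps)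
  using h apply algebra
  done

lemma part3_closed:
  fixes c \<beta> x :: real
  assumes c: "c > 0" and b0: "0 \<le> \<beta>" and b1: "\<beta> < 1" and n: "real n > 5 * c"
  defines "s \<equiv> 1 / (1 - \<beta>)"
  shows "D_op n c \<beta> (\<lambda>t. (t - x) ^ 4) x
    = ((3 * x^2 * (1 + s^2)^2 + 6 * c * x^3 * (1 + s^2) + 3 * c^2 * x^4) * (real n - 2 * c)
       + (x * (6 + 11 * s^2 - 12 * s^3 + 24 * s^4 - 20 * s^5 + 15 * s^6)
      + c * x^2 * (24 + 36 * s^2 - 24 * s^3 + 36 * s^4) + 36 * c^2 * x^3 * (1 + s^2) + 18 * c^3 * x^4))
      / ((real n - 3 * c) * (real n - 4 * c) * (real n - 5 * c))"
proof -
  define u where "u = real n * r_n n c \<beta> x"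
  define q where "q = 1 / (1 - \<beta>)"
  define A where "A = real n - 2 * c"
  define b where "b m = [x^4, -4 * x^3, 6 * x^2, -4 * x, 1] ! m" for m :: nat
  have f: "(\<lambda>t. (t - x) ^ 4) = (\<lambda>t. \<Sum>m\<le>4. b m * t ^ m)"
    by (rule ext) (simp add: b_def numeral_eq_Suc; algebra)
  have n1: "real n > (real 4 + 1) * c" using n by simp
  define M1 where "M1 = u * q"
  define M2 where "M2 = u * q^2 + u * \<beta> * q^3 + u^2 * q^2"
  define M3 where "M3 = u * q^3 + 4 * u * \<beta> * q^4 + 3 * u * \<beta>^2 * q^5 + 3 * u^2 * q^3 + 3 * u^2 * \<beta> * q^4 + u^3 * q^3"
  define M4 where "M4 = u * q^4 + 11 * u * \<beta> * q^5 + 25 * u * \<beta>^2 * q^6 + 15 * u * \<beta>^3 * q^7 + 7 * u^2 * q^4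
        + 22 * u^2 * \<beta> * q^5 + 15 * u^2 * \<beta>^2 * q^6 + 6 * u^3 * q^4 + 6 * u^3 * \<beta> * q^5 + u^4 * q^4"
  define L1 where "L1 = M1 / (real n - 2 * c)"
  define L2 where "L2 = (M2 + M1) / ((real n - 2 * c) * (real n - 3 * c))"
  define L3 where "L3 = (M3 + 3 * M2 + 2 * M1) / ((real n - 2 * c) * (real n - 3 * c) * (real n - 4 * c))"
  define L4 where "L4 = (M4 + 6 * M3 + 11 * M2 + 6 * M1) / ((real n - 2 * c) * (real n - 3 * c) * (real n - 4 * c) * (real n - 5 * c))"
  define L where "L = [1 - exp (- u), L1, L2, L3, L4]"
  have R: "(\<lambda>v. omega_beta \<beta> (Suc v) u * ((real n - c) / c * Ival n c m v)) sums (L ! m)" if "m \<le> 4" for m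
  proof -
    have "m = 0 \<or> m = 1 \<or> m = 2 \<or> m = 3 \<or> m = 4" using that by auto
    then show ?thesis unfolding L_def L1_def L2_def L3_def L4_def q_def M1_def M2_def M3_def M4_def
      using R0[OF b0 b1 c, of n u] R1[OF b0 b1 c, of n u] R2[OF b0 b1 c, of n u]
        R3[OF b0 b1 c, of n u] R4[OF b0 b1 c, of n u] n c by auto
  qed
  have "D_op n c \<beta> (\<lambda>t. (t - x) ^ 4) x = (\<Sum>m\<le>4. b m * L ! m) + exp (- u) * b 0"
    unfolding f by (rule D_op_poly[OF c n1 u_def R])
  also have "\<dots> = x^4 - 4 * x^3 * L1 + 6 * x^2 * L2 - 4 * x * L3 + L4"
    by (simp add: b_def L_def numeral_eq_Suc) algebra
  also have "\<dots> = x^4 - 4 * x^3 * (M1 / A) + 6 * x^2 * ((M2 + M1) / (A * (real n - 3 * c)))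
      - 4 * x * ((M3 + 3 * M2 + 2 * M1) / (A * (real n - 3 * c) * (real n - 4 * c)))
      + (M4 + 6 * M3 + 11 * M2 + 6 * M1) / (A * (real n - 3 * c) * (real n - 4 * c) * (real n - 5 * c))"
    unfolding A_def L1_def L2_def L3_def L4_def ..
  finally have D: "D_op n c \<beta> (\<lambda>t. (t - x) ^ 4) x = x^4 - 4 * x^3 * (M1 / A) + 6 * x^2 * ((M2 + M1) / (A * (real n - 3 * c)))
      - 4 * x * ((M3 + 3 * M2 + 2 * M1) / (A * (real n - 3 * c) * (real n - 4 * c)))
      + (M4 + 6 * M3 + 11 * M2 + 6 * M1) / (A * (real n - 3 * c) * (real n - 4 * c) * (real n - 5 * c))" .
  have uA: "u = A * (1 - \<beta>) * x" unfolding u_def A_def using n c by (intro u_eq) simp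
  have qs: "(1 - \<beta>) * q = 1" unfolding q_def using b1 by simp
  have m1: "M1 = A * x" unfolding M1_def uA using qs by algebra
  have m2: "M2 = A * x * q^2 + A^2 * x^2" unfolding M2_def uA using qs by algebra
  have m3: "M3 = A * x * (3 * q^4 - 2 * q^3) + 3 * A^2 * x^2 * q^2 + A^3 * x^3" unfolding M3_def uA using qs by algebra
  have m4: "M4 = A * x * (15 * q^6 - 20 * q^5 + 6 * q^4) + A^2 * x^2 * (15 * q^4 - 8 * q^3) + 6 * A^3 * x^3 * q^2 + A^4 * x^4"
    unfolding M4_def uA using qs by algebra
  have nz: "A \<noteq> 0" "real n - 3 * c \<noteq> 0" "real n - 4 * c \<noteq> 0" "real n - 5 * c \<noteq> 0"
    unfolding A_def using n c by auto
  have h: "real n - 3 * c = A - c" "real n - 4 * c = A - 2 * c" "real n - 5 * c = A - 3 * c"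
    unfolding A_def by simp_all
  show ?thesis unfolding D m1 m2 m3 m4 unfolding s_def q_def[symmetric] A_def[symmetric]
    by (rule alg4_raw[OF nz h])
qed

lemma lim_alg:
  fixes N B C E c K1 K2 :: real
  assumes nz: "N \<noteq> 0" "B \<noteq> 0" "C \<noteq> 0" "E \<noteq> 0"
    and h: "B = N - 3 * c" "C = N - 4 * c" "E = N - 5 * c"
  shows "(K2 * (N - 2 * c) + K1) / (B * C * E) * N
    = (K2 * (1 - 2 * c * (1 / N)) + K1 * (1 / N)) / ((1 - 3 * c * (1 / N)) * (1 - 4 * c * (1 / N)) * (1 - 5 * c * (1 / N))) * (1 / N)"
proof -
  have e1: "1 - 3 * c * (1 / N) = B / N" "1 - 4 * c * (1 / N) = C / N" "1 - 5 * c * (1 / N) = E / N"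
    unfolding h using nz(1) by (simp_all add: field_simps)
  have e2: "K2 * (1 - 2 * c * (1 / N)) + K1 * (1 / N) = (K2 * (N - 2 * c) + K1) / N"
    using nz(1) by (simp add: field_simps)
  show ?thesis unfolding e1 e2 using nz by (simp add: field_simps)
qed

lemma part3:
  fixes c \<beta> x :: real
  assumes c: "c > 0" and b0: "0 \<le> \<beta>" and b1: "\<beta> < 1"
  shows "(\<lambda>n::nat. D_op n c \<beta> (\<lambda>t. (t - x) ^ 4) x) \<in> o(\<lambda>n. 1 / real n)"
proof (rule smalloI_tendsto)
  define s where "s = 1 / (1 - \<beta>)"
  define K2 where "K2 = 3 * x^2 * (1 + s^2)^2 + 6 * c * x^3 * (1 + s^2) + 3 * c^2 * x^4"
  define K1 where "K1 = x * (6 + 11 * s^2 - 12 * s^3 + 24 * s^4 - 20 * s^5 + 15 * s^6)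
      + c * x^2 * (24 + 36 * s^2 - 24 * s^3 + 36 * s^4) + 36 * c^2 * x^3 * (1 + s^2) + 18 * c^3 * x^4"
  have Z: "(\<lambda>n::nat. 1 / real n) \<longlonglongrightarrow> 0"
    by (rule tendsto_divide_0[OF tendsto_const filterlim_at_top_imp_at_infinity[OF filterlim_real_sequentially]])
  have "(\<lambda>n::nat. (K2 * (1 - 2 * c * (1 / real n)) + K1 * (1 / real n)) /
        ((1 - 3 * c * (1 / real n)) * (1 - 4 * c * (1 / real n)) * (1 - 5 * c * (1 / real n))) * (1 / real n))
      \<longlonglongrightarrow> (K2 * (1 - 2 * c * 0) + K1 * 0) / ((1 - 3 * c * 0) * (1 - 4 * c * 0) * (1 - 5 * c * 0)) * 0"
    by (intro tendsto_intros Z) auto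
  hence L: "(\<lambda>n::nat. (K2 * (1 - 2 * c * (1 / real n)) + K1 * (1 / real n)) /
        ((1 - 3 * c * (1 / real n)) * (1 - 4 * c * (1 / real n)) * (1 - 5 * c * (1 / real n))) * (1 / real n))
      \<longlonglongrightarrow> 0" by simp
  have ev: "eventually (\<lambda>n::nat. real n > 5 * c) sequentially"
  proof -
    obtain N :: nat where "real N > 5 * c" using reals_Archimedean2 by blast
    then show ?thesis unfolding eventually_sequentially
      by (intro exI[of _ N]) (auto intro: less_le_trans)
  qed
  have "eventually (\<lambda>n::nat. (K2 * (1 - 2 * c * (1 / real n)) + K1 * (1 / real n)) /
        ((1 - 3 * c * (1 / real n)) * (1 - 4 * c * (1 / real n)) * (1 - 5 * c * (1 / real n))) * (1 / real n)
      = D_op n c \<beta> (\<lambda>t. (t - x) ^ 4) x / (1 / real n)) sequentially"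
    using ev
  proof eventually_elim
    case (elim n)
    have nz: "real n \<noteq> 0" "real n - 3 * c \<noteq> 0" "real n - 4 * c \<noteq> 0" "real n - 5 * c \<noteq> 0"
      using elim c by auto
    have "D_op n c \<beta> (\<lambda>t. (t - x) ^ 4) x / (1 / real n)
        = (K2 * (real n - 2 * c) + K1) / ((real n - 3 * c) * (real n - 4 * c) * (real n - 5 * c)) * real n"
      unfolding part3_closed[OF c b0 b1 elim] K1_def K2_def s_def by simp
    also have "\<dots> = (K2 * (1 - 2 * c * (1 / real n)) + K1 * (1 / real n)) /
        ((1 - 3 * c * (1 / real n)) * (1 - 4 * c * (1 / real n)) * (1 - 5 * c * (1 / real n))) * (1 / real n)"
      by (rule lim_alg[OF nz]) simp_all
    finally show ?case by simp
  qed
  with L show "(\<lambda>n::nat. D_op n c \<beta> (\<lambda>t. (t - x) ^ 4) x / (1 / real n)) \<longlonglongrightarrow> 0"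
    by (rule Lim_transform_eventually)
  show "eventually (\<lambda>n::nat. 1 / real n \<noteq> 0) sequentially"
    using eventually_gt_at_top[of "0::nat"] by (auto elim: eventually_mono)
qed

theorem lemma5:
  fixes c \<beta> x :: real
  assumes "c > 0" and "0 \<le> \<beta>" and "\<beta> < 1" and "x \<ge> 0"
  shows "(\<forall>n::nat. real n > 2 * c \<longrightarrow> D_op n c \<beta> (\<lambda>t. t - x) x = 0)
       \<and> (\<forall>n::nat. real n > 3 * c \<longrightarrow>
            D_op n c \<beta> (\<lambda>t. (t - x) ^ 2) x
              = c / (real n - 3 * c) * x ^ 2
                + (2 - 2 * \<beta> + \<beta> ^ 2) / ((real n - 3 * c) * (1 - \<beta>) ^ 2) * x)
       \<and> (\<lambda>n::nat. D_op n c \<beta> (\<lambda>t. (t - x) ^ 4) x) \<in> o(\<lambda>n. 1 / real n)"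
  using part1[OF assms(1-3)] part2[OF assms(1-3)] part3[OF assms(1-3)] by blast


end
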